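(* Let $k,m,n$ be positive integers with $k>m(n-1)$. Then the coefficient of $x_1^{k-n}x_2^{k-n+1}\cdots x_n^{k-1}$ (i.e. of $\prod_{i=1}^n x_i^{k-n+i-1}$) in $$(x_1+\cdots+x_n)^{(k-1)n-mn(n-1)}\prod_{1\leqslant i<j\leqslant n}(x_j-x_i)^{2m-1}$$ equals $$(-1)^{(m-1)\binom n2}\frac{m!(2m)!\cdots(nm)!}{(m!)^n n!}\cdot\frac{((k-1-m(n-1))n)!}{\prod_{r=0}^{n-1}(k-1-rm)!}.$$ In particular, the coefficient of $\prod_{i=1}^n x_i^{(m-1)(n-1)+i-1}$ in $\prod_{1\leqslant i<j\leqslant n}(x_j-x_i)^{2m-1}$ equals $(-1)^{(m-1)\binom n2}\dfrac{(mn)!}{(m!)^n n!}$. *)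

theory Defs
  imports Complex_Main "HOL-Library.Poly_Mapping"
begin

text \<open>Multivariate polynomials with integer coefficients in variables x_0, x_1, ...:
  a monomial is a finitely supported exponent vector, a polynomial a
  finitely supported map from monomials to coefficients, with convolution product.\<close>

type_synonym mpoly_int = "(nat \<Rightarrow>\<^sub>0 nat) \<Rightarrow>\<^sub>0 int"

definition var :: "nat \<Rightarrow> mpoly_int" where
  "var i = Poly_Mapping.single (Poly_Mapping.single i 1) 1"

definition coeff_of :: "mpoly_int \<Rightarrow> (nat \<Rightarrow>\<^sub>0 nat) \<Rightarrow> int" where
  "coeff_of p mon = Poly_Mapping.lookup p mon"

definition monomial_exps :: "nat \<Rightarrow> (nat \<Rightarrow> nat) \<Rightarrow> (nat \<Rightarrow>\<^sub>0 nat)" where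
  "monomial_exps n e = (\<Sum>i\<in>{1..n}. Poly_Mapping.single i (e i))"

end

theory Submission
  imports Defs "Jordan_Normal_Form.Determinant" "HOL-Computational_Algebra.Polynomial" "HOL-Library.FuncSet"
begin


type_synonym mp = "(nat \<Rightarrow>\<^sub>0 nat) \<Rightarrow>\<^sub>0 int"

definition mmono :: "(nat \<Rightarrow> real) \<Rightarrow> (nat \<Rightarrow>\<^sub>0 nat) \<Rightarrow> real" where
  "mmono a u = (\<Prod>i\<in>Poly_Mapping.keys u. a i ^ Poly_Mapping.lookup u i)"

definition mev :: "(nat \<Rightarrow> real) \<Rightarrow> mp \<Rightarrow> real" where
  "mev a p = (\<Sum>u\<in>Poly_Mapping.keys p. of_int (Poly_Mapping.lookup p u) * mmono a u)"

lemma mmono_superset: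
  assumes "finite S" "Poly_Mapping.keys u \<subseteq> S"
  shows "mmono a u = (\<Prod>i\<in>S. a i ^ Poly_Mapping.lookup u i)"
  unfolding mmono_def
  by (rule prod.mono_neutral_left) (use assms in \<open>auto simp: in_keys_iff\<close>)

lemma mmono_add: "mmono a (u + v) = mmono a u * mmono a v"
proof -
  let ?S = "Poly_Mapping.keys u \<union> Poly_Mapping.keys v"
  have "mmono a (u + v) = (\<Prod>i\<in>?S. a i ^ Poly_Mapping.lookup (u+v) i)"
    by (rule mmono_superset) (auto dest: subsetD[OF keys_add])
  also have "\<dots> = (\<Prod>i\<in>?S. a i ^ Poly_Mapping.lookup u i * a i ^ Poly_Mapping.lookup v i)"
    by (simp add: lookup_add power_add)
  also have "\<dots> = mmono a u * mmono a v"
    by (simp add: prod.distrib mmono_superset[of ?S])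
  finally show ?thesis .
qed

lemma mmono_zero[simp]: "mmono a 0 = 1"
  by (simp add: mmono_def)

lemma mmono_single[simp]: "mmono a (Poly_Mapping.single i e) = a i ^ e"
  by (simp add: mmono_def)

lemma mev_add: "mev a (p + q) = mev a p + mev a q"
  unfolding mev_def
  by (rule setsum_keys_plus_distrib) (auto simp: algebra_simps)

lemma mev_zero[simp]: "mev a 0 = 0"
  by (simp add: mev_def)

lemma mev_uminus: "mev a (- p) = - mev a p"
  unfolding mev_def by (simp add: keys_minus sum_negf)

lemma mev_diff: "mev a (p - q) = mev a p - mev a q"
  using mev_add[of a p "-q"] by (simp add: mev_uminus)

lemma mev_single[simp]: "mev a (Poly_Mapping.single u c) = of_int c * mmono a u"
  by (simp add: mev_def)

lemma mev_mult: "mev a (p * q) = mev a p * mev a q"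
proof -
  have fv: "mev a (p * frag_of v) = mev a p * mev a (frag_of v)" for v
    using subset_UNIV
  proof (induction p rule: frag_induction)
    case zero then show ?case by simp
  next
    case (one x) then show ?case by (simp add: mult_single mmono_add)
  next
    case (diff a1 b) then show ?case by (simp add: left_diff_distrib mev_diff)
  qed
  show ?thesis
    using subset_UNIV
  proof (induction q rule: frag_induction)
    case zero then show ?case by simp
  next
    case (one x) then show ?case using fv by simp
  next
    case (diff a1 b) then show ?case by (simp add: right_diff_distrib mev_diff)
  qed
qed

lemma mev_one[simp]: "mev a 1 = 1"
  using mev_single[of a 0 1] by simp

lemma mev_sum: "mev a (\<Sum>x\<in>S. f x) = (\<Sum>x\<in>S. mev a (f x))"
  by (induction S rule: infinite_finite_induct) (auto simp: mev_add)

lemma mev_prod: "mev a (\<Prod>x\<in>S. f x) = (\<Prod>x\<in>S. mev a (f x))"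
  by (induction S rule: infinite_finite_induct) (auto simp: mev_mult)

lemma mev_power: "mev a (p ^ k) = mev a p ^ k"
  by (induction k) (auto simp: mev_mult)

lemma mev_var[simp]: "mev a (var i) = a i"
  by (simp add: var_def)


lemma mp_of_int: "(of_int c :: mp) = Poly_Mapping.single 0 c"
proof -
  have "Poly_Mapping.single 0 (of_int c) = (of_int c :: mp)" by (rule single_of_int)
  then show ?thesis unfolding of_int_eq_id id_def by simp
qed

lemma mp_of_nat: "(of_nat c :: mp) = Poly_Mapping.single 0 (int c)"
  by (metis mp_of_int of_int_of_nat_eq)

lemma mev_of_int[simp]: "mev a (of_int c) = of_int c"
  by (simp add: mp_of_int)

lemma mev_of_nat[simp]: "mev a (of_nat c) = of_nat c"
  using mev_of_int[of a "int c"] by simp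

definition vin :: "nat set \<Rightarrow> mp \<Rightarrow> bool" where
  "vin I p \<longleftrightarrow> (\<forall>u\<in>Poly_Mapping.keys p. Poly_Mapping.keys u \<subseteq> I)"

lemma mmono_cong: "Poly_Mapping.keys u \<subseteq> I \<Longrightarrow> (\<And>i. i \<in> I \<Longrightarrow> a i = b i) \<Longrightarrow> mmono a u = mmono b u"
  unfolding mmono_def by (rule prod.cong) auto

lemma mev_cong:
  assumes "vin I p" "\<And>i. i \<in> I \<Longrightarrow> a i = b i"
  shows "mev a p = mev b p"
  unfolding mev_def
proof (rule sum.cong[OF refl])
  fix u assume "u \<in> Poly_Mapping.keys p"
  then have "mmono a u = mmono b u"
    using assms by (intro mmono_cong[of u I]) (auto simp: vin_def)
  then show "of_int (Poly_Mapping.lookup p u) * mmono a u = of_int (Poly_Mapping.lookup p u) * mmono b u"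
    by simp
qed

lemma vin_add: "vin I p \<Longrightarrow> vin I q \<Longrightarrow> vin I (p + q)"
  unfolding vin_def using keys_add[of p q] by (meson Un_iff subsetD)

lemma vin_uminus: "vin I p \<Longrightarrow> vin I (- p)"
  unfolding vin_def by simp

lemma vin_diff: "vin I p \<Longrightarrow> vin I q \<Longrightarrow> vin I (p - q)"
  using vin_add[of I p "-q"] vin_uminus[of I q] by (simp only: diff_conv_add_uminus)

lemma vin_mult:
  assumes p0: "vin I p" and q0: "vin I q" shows "vin I (p * q)"
  unfolding vin_def
proof
  have p: "\<forall>u\<in>Poly_Mapping.keys p. Poly_Mapping.keys u \<subseteq> I" using p0 by (simp add: vin_def)
  have q: "\<forall>u\<in>Poly_Mapping.keys q. Poly_Mapping.keys u \<subseteq> I" using q0 by (simp add: vin_def)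
  fix w assume w: "w \<in> Poly_Mapping.keys (p * q)"
  then obtain u v where uv: "w = u + v" "u \<in> Poly_Mapping.keys p" "v \<in> Poly_Mapping.keys q"
    using keys_mult[of p q] by blast
  then have "Poly_Mapping.keys u \<subseteq> I" "Poly_Mapping.keys v \<subseteq> I" using p q by auto
  then show "Poly_Mapping.keys w \<subseteq> I" using keys_add[of u v] uv(1) by blast
qed

lemma vin_one[simp]: "vin I 1"
  by (simp add: vin_def)

lemma vin_zero[simp]: "vin I 0"
  by (simp add: vin_def)

lemma vin_of_int[simp]: "vin I (of_int c)"
  by (simp add: vin_def mp_of_int)

lemma vin_of_nat[simp]: "vin I (of_nat c)"
  using vin_of_int[of I "int c"] by simp

lemma vin_var: "i \<in> I \<Longrightarrow> vin I (var i)"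
  by (simp add: vin_def var_def)

lemma vin_sum: "(\<And>x. x \<in> S \<Longrightarrow> vin I (f x)) \<Longrightarrow> vin I (\<Sum>x\<in>S. f x)"
  by (induction S rule: infinite_finite_induct) (auto intro: vin_add)

lemma vin_prod: "(\<And>x. x \<in> S \<Longrightarrow> vin I (f x)) \<Longrightarrow> vin I (\<Prod>x\<in>S. f x)"
  by (induction S rule: infinite_finite_induct) (auto intro: vin_mult)

lemma vin_power: "vin I p \<Longrightarrow> vin I (p ^ k)"
  by (induction k) (auto intro: vin_mult)


definition mdeg :: "(nat \<Rightarrow>\<^sub>0 nat) \<Rightarrow> nat" where
  "mdeg u = (\<Sum>i\<in>Poly_Mapping.keys u. Poly_Mapping.lookup u i)"

lemma mdeg_superset:
  assumes "finite S" "Poly_Mapping.keys u \<subseteq> S"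
  shows "mdeg u = (\<Sum>i\<in>S. Poly_Mapping.lookup u i)"
  unfolding mdeg_def
  by (rule sum.mono_neutral_left) (use assms in \<open>auto simp: in_keys_iff\<close>)

lemma mdeg_add: "mdeg (u + v) = mdeg u + mdeg v"
proof -
  let ?S = "Poly_Mapping.keys u \<union> Poly_Mapping.keys v"
  have "mdeg (u + v) = (\<Sum>i\<in>?S. Poly_Mapping.lookup (u+v) i)"
    by (rule mdeg_superset) (use keys_add[of u v] in auto)
  also have "\<dots> = (\<Sum>i\<in>?S. Poly_Mapping.lookup u i) + (\<Sum>i\<in>?S. Poly_Mapping.lookup v i)"
    by (simp add: lookup_add sum.distrib)
  also have "\<dots> = mdeg u + mdeg v"
    by (simp add: mdeg_superset[of ?S])
  finally show ?thesis .
qed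

lemma mdeg_zero[simp]: "mdeg 0 = 0"
  by (simp add: mdeg_def)

lemma mdeg_single[simp]: "mdeg (Poly_Mapping.single i e) = e"
  by (simp add: mdeg_def)

definition dle :: "nat \<Rightarrow> mp \<Rightarrow> bool" where
  "dle D p \<longleftrightarrow> (\<forall>u\<in>Poly_Mapping.keys p. mdeg u \<le> D)"

definition dlt :: "nat \<Rightarrow> mp \<Rightarrow> bool" where
  "dlt D p \<longleftrightarrow> (\<forall>u\<in>Poly_Mapping.keys p. mdeg u < D)"

definition teq :: "nat \<Rightarrow> mp \<Rightarrow> mp \<Rightarrow> bool" where
  "teq D p q \<longleftrightarrow> dle D p \<and> dle D q \<and> dlt D (p - q)"

lemma dle_mono: "dle D p \<Longrightarrow> D \<le> D' \<Longrightarrow> dle D' p"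
  unfolding dle_def by force

lemma dlt_dle: "dlt D p \<Longrightarrow> dle D p"
  unfolding dle_def dlt_def by force

lemma dle_add: "dle D p \<Longrightarrow> dle D q \<Longrightarrow> dle D (p + q)"
  unfolding dle_def using keys_add[of p q] by (meson Un_iff subsetD)

lemma dlt_add: "dlt D p \<Longrightarrow> dlt D q \<Longrightarrow> dlt D (p + q)"
  unfolding dlt_def using keys_add[of p q] by (meson Un_iff subsetD)

lemma dle_uminus: "dle D p \<Longrightarrow> dle D (- p)"
  unfolding dle_def by simp

lemma dlt_uminus: "dlt D p \<Longrightarrow> dlt D (- p)"
  unfolding dlt_def by simp

lemma dle_diff: "dle D p \<Longrightarrow> dle D q \<Longrightarrow> dle D (p - q)"
  using dle_add[of D p "-q"] dle_uminus[of D q] by (simp only: diff_conv_add_uminus)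

lemma dlt_diff: "dlt D p \<Longrightarrow> dlt D q \<Longrightarrow> dlt D (p - q)"
  using dlt_add[of D p "-q"] dlt_uminus[of D q] by (simp only: diff_conv_add_uminus)

lemma keys_mult_obtain:
  assumes "w \<in> Poly_Mapping.keys (p * q)"
  obtains u v where "w = u + v" "u \<in> Poly_Mapping.keys p" "v \<in> Poly_Mapping.keys q"
  using keys_mult[of p q] assms by blast

lemma dle_mult: "dle a p \<Longrightarrow> dle b q \<Longrightarrow> dle (a + b) (p * q)"
  unfolding dle_def
proof
  fix w assume p: "\<forall>u\<in>Poly_Mapping.keys p. mdeg u \<le> a" and q: "\<forall>u\<in>Poly_Mapping.keys q. mdeg u \<le> b"
    and w: "w \<in> Poly_Mapping.keys (p * q)"
  from w obtain u v where "w = u + v" "u \<in> Poly_Mapping.keys p" "v \<in> Poly_Mapping.keys q"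
    by (rule keys_mult_obtain)
  then show "mdeg w \<le> a + b" using p q by (simp add: mdeg_add add_mono)
qed

lemma dlt_mult1: "dlt a p \<Longrightarrow> dle b q \<Longrightarrow> dlt (a + b) (p * q)"
  unfolding dle_def dlt_def
proof
  fix w assume p: "\<forall>u\<in>Poly_Mapping.keys p. mdeg u < a" and q: "\<forall>u\<in>Poly_Mapping.keys q. mdeg u \<le> b"
    and w: "w \<in> Poly_Mapping.keys (p * q)"
  from w obtain u v where "w = u + v" "u \<in> Poly_Mapping.keys p" "v \<in> Poly_Mapping.keys q"
    by (rule keys_mult_obtain)
  then show "mdeg w < a + b" using p q by (simp add: mdeg_add add_less_le_mono)
qed

lemma dlt_mult2: "dle a p \<Longrightarrow> dlt b q \<Longrightarrow> dlt (a + b) (p * q)"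
  using dlt_mult1[of b q a p] by (simp add: mult.commute add.commute)

lemma teq_mult:
  assumes "teq a p p'" "teq b q q'"
  shows "teq (a + b) (p * q) (p' * q')"
proof -
  have "p * q - p' * q' = (p - p') * q + p' * (q - q')"
    by (simp add: algebra_simps)
  moreover have "dlt (a + b) ((p - p') * q)"
    using assms by (intro dlt_mult1) (auto simp: teq_def)
  moreover have "dlt (a + b) (p' * (q - q'))"
    using assms by (intro dlt_mult2) (auto simp: teq_def)
  ultimately have "dlt (a + b) (p * q - p' * q')"
    by (simp add: dlt_add)
  then show ?thesis using assms by (auto simp: teq_def intro: dle_mult)
qed

lemma teq_one: "teq 0 1 1"
  by (simp add: teq_def dle_def dlt_def)

lemma teq_prod:
  assumes "\<And>x. x \<in> S \<Longrightarrow> teq (d x) (f x) (g x)"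
  shows "teq (\<Sum>x\<in>S. d x) (\<Prod>x\<in>S. f x) (\<Prod>x\<in>S. g x)"
  using assms
proof (induction S rule: infinite_finite_induct)
  case (insert x F)
  then show ?case using teq_mult[of "d x" "f x" "g x" "sum d F" "prod f F" "prod g F"] by simp
qed (auto simp: teq_one)

lemma teq_power:
  assumes "teq a p q"
  shows "teq (k * a) (p ^ k) (q ^ k)"
proof (induction k)
  case 0 then show ?case by (simp add: teq_one)
next
  case (Suc k)
  then show ?case using teq_mult[OF assms Suc] by simp
qed

lemma teq_coeff:
  assumes "teq D p q" "mdeg u = D"
  shows "Poly_Mapping.lookup p u = Poly_Mapping.lookup q u"
proof -
  have "u \<notin> Poly_Mapping.keys (p - q)"
    using assms by (auto simp: teq_def dlt_def)
  then show ?thesis by (simp add: in_keys_iff lookup_minus)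
qed

lemma dle_var: "dle 1 (var i)"
  by (simp add: dle_def var_def)

lemma dlt_of_int: "dlt 1 (of_int c)"
  by (simp add: dlt_def mp_of_int)

lemma dle_of_int: "dle 0 (of_int c)"
  by (simp add: dle_def mp_of_int)

lemma dle_sum: "(\<And>x. x \<in> S \<Longrightarrow> dle D (f x)) \<Longrightarrow> dle D (\<Sum>x\<in>S. f x)"
proof (induction S rule: infinite_finite_induct)
  case (insert x F)
  then show ?case by (simp add: dle_add)
qed (auto simp: dle_def)

lemma teq_shift:
  assumes "dle 1 p"
  shows "teq 1 (p - of_int c) p"
proof -
  have "dle 1 (p - of_int c)"
    using assms dle_mono[OF dle_of_int[of c]] by (intro dle_diff) auto
  moreover have "dlt 1 ((p - of_int c) - p)"
    using dlt_uminus[OF dlt_of_int[of c]] by simp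
  ultimately show ?thesis using assms by (simp add: teq_def)
qed

lemma dle_prod: "(\<And>x. x \<in> S \<Longrightarrow> dle (d x) (f x)) \<Longrightarrow> dle (\<Sum>x\<in>S. d x) (\<Prod>x\<in>S. f x)"
  using teq_prod[of S d f f] by (auto simp: teq_def dle_def dlt_def)

lemma dle_power: "dle a p \<Longrightarrow> dle (k * a) (p ^ k)"
  using teq_power[of a p p k] by (auto simp: teq_def dle_def dlt_def)


definition phi :: "real set \<Rightarrow> real \<Rightarrow> real" where
  "phi A x = (\<Prod>b\<in>A - {x}. x - b)"

lemma phi_nonzero: "finite A \<Longrightarrow> phi A x \<noteq> 0"
  unfolding phi_def by (auto simp: prod_zero_iff)

lemma lagr_sum:
  fixes A :: "real set"
  assumes fin: "finite A" and card: "card A = Suc s" and e: "e \<le> s"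
  shows "(\<Sum>a\<in>A. a ^ e / phi A a) = (if e = s then 1 else 0)"
proof -
  define L where "L a = (\<Prod>b\<in>A - {a}. [:- b, 1:])" for a
  define q where "q = (\<Sum>a\<in>A. smult (a ^ e / phi A a) (L a))"
  have degL: "degree (L a) = s" if "a \<in> A" for a
  proof -
    have "degree (L a) = (\<Sum>b\<in>A - {a}. degree [:- b, (1::real):])"
      unfolding L_def by (rule degree_prod_sum_eq) auto
    also have "\<dots> = card (A - {a})" by simp
    also have "\<dots> = s" using card that fin by simp
    finally show ?thesis .
  qed
  have lcL: "lead_coeff (L a) = 1" for a
    unfolding L_def by (simp add: lead_coeff_prod)
  have coeffL: "coeff (L a) s = 1" if "a \<in> A" for a
    using lcL[of a] degL[OF that] by simp
  have degq: "degree q \<le> s"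
    unfolding q_def
    by (rule degree_sum_le) (use fin in \<open>auto intro: order.trans[OF degree_smult_le] simp: degL\<close>)
  have polyL: "poly (L a) c = (if c = a then phi A a else 0)" if "a \<in> A" "c \<in> A" for a c
  proof (cases "c = a")
    case True then show ?thesis by (simp add: L_def phi_def poly_prod)
  next
    case False
    then have "c \<in> A - {a}" using that by simp
    then have "(\<Prod>b\<in>A - {a}. c - b) = 0"
      using fin by (intro prod_zero) auto
    then show ?thesis using False by (simp add: L_def poly_prod)
  qed
  have polyq: "poly q c = poly (monom 1 e) c" if "c \<in> A" for c
  proof -
    have "poly q c = (\<Sum>a\<in>A. (a ^ e / phi A a) * poly (L a) c)"
      by (simp add: q_def poly_sum)
    also have "\<dots> = (\<Sum>a\<in>A. if a = c then c ^ e else 0)"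
      by (rule sum.cong) (use that fin phi_nonzero polyL in auto)
    also have "\<dots> = c ^ e" using that fin by simp
    finally show ?thesis by (simp add: poly_monom)
  qed
  have "q = monom 1 e"
    by (rule poly_eqI_degree[of A]) (use polyq degq card e in \<open>auto simp: degree_monom_eq\<close>)
  then have "coeff q s = (if e = s then 1 else 0)"
    by (simp add: coeff_monom)
  moreover have "coeff q s = (\<Sum>a\<in>A. a ^ e / phi A a)"
    unfolding q_def by (simp add: coeff_sum coeffL)
  ultimately show ?thesis by simp
qed

lemma sum_PiE_prod:
  fixes f :: "'a \<Rightarrow> 'b \<Rightarrow> real"
  assumes "finite I" "\<And>i. i \<in> I \<Longrightarrow> finite (A i)"
  shows "(\<Sum>a\<in>PiE I A. \<Prod>i\<in>I. f i (a i)) = (\<Prod>i\<in>I. \<Sum>x\<in>A i. f i x)"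
  using prod_sum_PiE[of I A f] assms by simp

theorem cns:
  fixes p :: mp and I :: "nat set" and A :: "nat \<Rightarrow> real set" and E :: "nat \<Rightarrow>\<^sub>0 nat"
  assumes fin: "finite I" and finA: "\<And>i. i \<in> I \<Longrightarrow> finite (A i)" and neA: "\<And>i. i \<in> I \<Longrightarrow> A i \<noteq> {}"
    and vin: "vin I p" and deg: "dle (\<Sum>i\<in>I. card (A i) - 1) p"
    and E: "\<And>i. i \<in> I \<Longrightarrow> Poly_Mapping.lookup E i = card (A i) - 1" "Poly_Mapping.keys E \<subseteq> I"
  shows "of_int (Poly_Mapping.lookup p E) = (\<Sum>a\<in>PiE I A. mev a p / (\<Prod>i\<in>I. phi (A i) (a i)))"
proof -
  let ?c = "\<lambda>u. real_of_int (Poly_Mapping.lookup p u)"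
  let ?H = "\<lambda>i e. (\<Sum>x\<in>A i. x ^ e / phi (A i) x)"
  have key: "(\<Sum>a\<in>PiE I A. mmono a u / (\<Prod>i\<in>I. phi (A i) (a i))) = (if u = E then 1 else 0)"
    if u: "u \<in> Poly_Mapping.keys p" for u
  proof -
    have ku: "Poly_Mapping.keys u \<subseteq> I" using vin u by (auto simp: vin_def)
    have "(\<Sum>a\<in>PiE I A. mmono a u / (\<Prod>i\<in>I. phi (A i) (a i)))
        = (\<Sum>a\<in>PiE I A. \<Prod>i\<in>I. a i ^ Poly_Mapping.lookup u i / phi (A i) (a i))"
      by (rule sum.cong) (auto simp: mmono_superset[OF fin ku] prod_dividef)
    also have "\<dots> = (\<Prod>i\<in>I. ?H i (Poly_Mapping.lookup u i))"
      by (rule sum_PiE_prod) (use fin finA in auto)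
    also have "\<dots> = (if u = E then 1 else 0)"
    proof (cases "u = E")
      case True
      have "?H i (Poly_Mapping.lookup u i) = 1" if "i \<in> I" for i
      proof -
        have "card (A i) = Suc (card (A i) - 1)" using finA[OF that] neA[OF that]
          by (simp add: card_gt_0_iff)
        then show ?thesis using True E(1)[OF that] lagr_sum[OF finA[OF that]] by simp
      qed
      then show ?thesis using True by simp
    next
      case False
      have "\<exists>i\<in>I. Poly_Mapping.lookup u i < card (A i) - 1"
      proof (rule ccontr)
        assume "\<not> ?thesis"
        then have ge: "\<And>i. i \<in> I \<Longrightarrow> card (A i) - 1 \<le> Poly_Mapping.lookup u i" by force
        have "\<exists>i\<in>I. Poly_Mapping.lookup u i \<noteq> card (A i) - 1"
        proof (rule ccontr)
          assume nex: "\<not> (\<exists>i\<in>I. Poly_Mapping.lookup u i \<noteq> card (A i) - 1)"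
          have "Poly_Mapping.lookup u i = Poly_Mapping.lookup E i" for i
          proof (cases "i \<in> I")
            case True then show ?thesis using E(1) nex by auto
          next
            case False
            then have "i \<notin> Poly_Mapping.keys u" "i \<notin> Poly_Mapping.keys E" using ku E(2) by auto
            then show ?thesis by (simp add: in_keys_iff)
          qed
          then have "u = E" by (rule poly_mapping_eqI)
          then show False using False by simp
        qed
        then obtain i0 where i0: "i0 \<in> I" "Poly_Mapping.lookup u i0 \<noteq> card (A i0) - 1" by blast
        have "(\<Sum>i\<in>I. card (A i) - 1) < (\<Sum>i\<in>I. Poly_Mapping.lookup u i)"
        proof (rule sum_strict_mono_ex1)
          show "\<exists>a\<in>I. card (A a) - 1 < Poly_Mapping.lookup u a"
            using i0 ge[OF i0(1)] by (intro bexI[of _ i0]) auto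
        qed (use fin ge in auto)
        also have "\<dots> = mdeg u" by (rule mdeg_superset[OF fin ku, symmetric])
        also have "\<dots> \<le> (\<Sum>i\<in>I. card (A i) - 1)" using deg u by (auto simp: dle_def)
        finally show False by simp
      qed
      then obtain j where j: "j \<in> I" "Poly_Mapping.lookup u j < card (A j) - 1" by blast
      have "card (A j) = Suc (card (A j) - 1)" using finA[OF j(1)] neA[OF j(1)]
        by (simp add: card_gt_0_iff)
      then have "?H j (Poly_Mapping.lookup u j) = 0"
        using lagr_sum[OF finA[OF j(1)], of "card (A j) - 1" "Poly_Mapping.lookup u j"] j(2) by simp
      then have "(\<Prod>i\<in>I. ?H i (Poly_Mapping.lookup u i)) = 0"
        using fin j(1) by (intro prod_zero) auto
      then show ?thesis using False by simp
    qed
    finally show ?thesis .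
  qed
  have "(\<Sum>a\<in>PiE I A. mev a p / (\<Prod>i\<in>I. phi (A i) (a i)))
      = (\<Sum>a\<in>PiE I A. \<Sum>u\<in>Poly_Mapping.keys p. ?c u * (mmono a u / (\<Prod>i\<in>I. phi (A i) (a i))))"
    by (simp add: mev_def sum_divide_distrib)
  also have "\<dots> = (\<Sum>u\<in>Poly_Mapping.keys p. ?c u * (\<Sum>a\<in>PiE I A. mmono a u / (\<Prod>i\<in>I. phi (A i) (a i))))"
    by (simp add: sum.swap[of _ "PiE I A"] sum_distrib_left)
  also have "\<dots> = (\<Sum>u\<in>Poly_Mapping.keys p. ?c u * (if u = E then 1 else 0))"
    by (rule sum.cong) (auto simp: key)
  also have "\<dots> = ?c E"
  proof (cases "E \<in> Poly_Mapping.keys p")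
    case True then show ?thesis by (simp add: if_distrib[of "(*) _"] cong: if_cong)
  next
    case False
    then have "(\<Sum>u\<in>Poly_Mapping.keys p. ?c u * (if u = E then 1 else 0)) = 0"
      by (intro sum.neutral) auto
    then show ?thesis using False by (simp add: in_keys_iff)
  qed
  finally show ?thesis by simp
qed


lemma mult_entry:
  assumes "A \<in> carrier_mat n n" "B \<in> carrier_mat n n" "i < n" "j < n"
  shows "(A * B) $$ (i, j) = (\<Sum>l<n. A $$ (i, l) * B $$ (l, j))"
  using assms by (auto simp: scalar_prod_def atLeast0LessThan intro!: sum.cong)

lemma det_diag_scale:
  fixes c y :: "nat \<Rightarrow> 'a::comm_ring_1"
  shows "det (mat n n (\<lambda>(i,j). c i * Y i j)) = (\<Prod>i<n. c i) * det (mat n n (\<lambda>(i,j). Y i j))"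
proof -
  let ?D = "mat n n (\<lambda>(i,j). if i = j then c i else 0)"
  let ?Y = "mat n n (\<lambda>(i,j). Y i j)"
  have "mat n n (\<lambda>(i,j). c i * Y i j) = ?D * ?Y"
  proof (rule eq_matI)
    fix i j assume ij: "i < dim_row (?D * ?Y)" "j < dim_col (?D * ?Y)"
    then have "i < n" "j < n" by auto
    then have "(?D * ?Y) $$ (i, j) = (\<Sum>l<n. (if i = l then c i else 0) * Y l j)"
      by (subst mult_entry[of _ n]) auto
    also have "\<dots> = c i * Y i j" using \<open>i < n\<close>
      by (simp add: if_distrib[of "\<lambda>x. x * _"] cong: if_cong)
    finally show "mat n n (\<lambda>(i,j). c i * Y i j) $$ (i, j) = (?D * ?Y) $$ (i, j)"
      using \<open>i < n\<close> \<open>j < n\<close> by simp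
  qed auto
  moreover have "det ?D = (\<Prod>i<n. c i)"
  proof -
    have "det ?D = prod_list (diag_mat ?D)"
      by (rule det_upper_triangular) (auto simp: upper_triangular_def)
    also have "\<dots> = (\<Prod>i<n. c i)"
      by (simp add: diag_mat_def prod.distinct_set_conv_list[symmetric] atLeast0LessThan)
    finally show ?thesis .
  qed
  ultimately show ?thesis by (simp add: det_mult[of _ n])
qed

lemma vdm_det:
  fixes x :: "nat \<Rightarrow> 'a::comm_ring_1"
  shows "det (mat n n (\<lambda>(i,j). x i ^ j)) = (\<Prod>j<n. \<Prod>i<j. (x j - x i))"
proof (induction n arbitrary: x)
  case 0
  then show ?case by simp
next
  case (Suc n)
  let ?N = "Suc n"
  let ?W = "mat ?N ?N (\<lambda>(i,j). x i ^ j)"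
  let ?U = "mat ?N ?N (\<lambda>(l,j). (if l = j then 1 else 0) + (if Suc l = j then - x 0 else 0))"
  let ?B = "mat ?N ?N (\<lambda>(i,j). if j = 0 then 1 else x i ^ j - x 0 * x i ^ (j - 1))"
  have detU: "det ?U = 1"
  proof -
    have "det ?U = prod_list (diag_mat ?U)"
      by (rule det_upper_triangular) (auto simp: upper_triangular_def)
    also have "\<dots> = 1"
      by (simp add: diag_mat_def prod.distinct_set_conv_list[symmetric] atLeast0LessThan)
    finally show ?thesis .
  qed
  have WU: "?W * ?U = ?B"
  proof (rule eq_matI)
    fix i j assume ij: "i < dim_row ?B" "j < dim_col ?B"
    then have i: "i < ?N" and j: "j < ?N" by auto
    have "(?W * ?U) $$ (i, j) = (\<Sum>l<?N. x i ^ l * ((if l = j then 1 else 0) + (if Suc l = j then - x 0 else 0)))"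
      using i j by (subst mult_entry[of _ ?N]) auto
    also have "\<dots> = (\<Sum>l<?N. (if l = j then x i ^ l else 0)) + (\<Sum>l<?N. (if Suc l = j then - x 0 * x i ^ l else 0))"
      by (simp add: distrib_left sum.distrib if_distrib[of "\<lambda>t. x i ^ _ * t"] mult.commute cong: if_cong)
    also have "\<dots> = ?B $$ (i, j)"
    proof (cases j)
      case 0 then show ?thesis using i j by simp
    next
      case (Suc j')
      have "(\<Sum>l<?N. (if Suc l = j then - x 0 * x i ^ l else 0)) = (\<Sum>l<?N. (if l = j' then - x 0 * x i ^ l else 0))"
        using Suc by (intro sum.cong) auto
      also have "\<dots> = - x 0 * x i ^ j'" using Suc j by simp
      finally show ?thesis using Suc i j by simp
    qed
    finally show "(?W * ?U) $$ (i, j) = ?B $$ (i, j)" by simp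
  qed auto
  have "det ?W = det ?B"
    using WU detU det_mult[of ?W ?N ?U] by simp
  also have "det ?B = (\<Sum>j<?N. ?B $$ (0, j) * cofactor ?B 0 j)"
    by (rule laplace_expansion_row[of _ ?N]) auto
  also have "\<dots> = cofactor ?B 0 0"
  proof -
    have "(\<Sum>j<?N. ?B $$ (0, j) * cofactor ?B 0 j) = ?B $$ (0, 0) * cofactor ?B 0 0 + (\<Sum>j\<in>{..<?N} - {0}. ?B $$ (0, j) * cofactor ?B 0 j)"
      by (subst sum.remove[of _ 0]) auto
    moreover have "(\<Sum>j\<in>{..<?N} - {0}. ?B $$ (0, j) * cofactor ?B 0 j) = 0"
    proof (rule sum.neutral, intro ballI)
      fix j assume "j \<in> {..<?N} - {0}"
      then obtain j' where "j = Suc j'" "j < ?N" by (cases j) auto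
      then show "?B $$ (0, j) * cofactor ?B 0 j = 0" by simp
    qed
    ultimately show ?thesis by simp
  qed
  also have "\<dots> = det (mat n n (\<lambda>(i,j). (x (Suc i) - x 0) * x (Suc i) ^ j))"
  proof -
    have "mat_delete ?B 0 0 = mat n n (\<lambda>(i,j). (x (Suc i) - x 0) * x (Suc i) ^ j)"
      by (rule eq_matI) (auto simp: mat_delete_def algebra_simps)
    then show ?thesis by (simp add: cofactor_def)
  qed
  also have "\<dots> = (\<Prod>i<n. x (Suc i) - x 0) * (\<Prod>j<n. \<Prod>i<j. (x (Suc j) - x (Suc i)))"
    using det_diag_scale[of n "\<lambda>i. x (Suc i) - x 0" "\<lambda>i j. x (Suc i) ^ j"] Suc.IH[of "\<lambda>i. x (Suc i)"]
    by simp
  also have "\<dots> = (\<Prod>j<?N. \<Prod>i<j. (x j - x i))"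
  proof -
    have inner: "(\<Prod>i<Suc j. (x (Suc j) - x i)) = (x (Suc j) - x 0) * (\<Prod>i<j. (x (Suc j) - x (Suc i)))" for j
      by (rule prod.lessThan_Suc_shift)
    have "(\<Prod>j<?N. \<Prod>i<j. (x j - x i)) = (\<Prod>i<0. (x 0 - x i)) * (\<Prod>j<n. \<Prod>i<Suc j. (x (Suc j) - x i))"
      by (rule prod.lessThan_Suc_shift)
    also have "\<dots> = (\<Prod>j<n. (x (Suc j) - x 0) * (\<Prod>i<j. (x (Suc j) - x (Suc i))))"
      by (simp only: inner) simp
    also have "\<dots> = (\<Prod>i<n. x (Suc i) - x 0) * (\<Prod>j<n. \<Prod>i<j. (x (Suc j) - x (Suc i)))"
      by (rule prod.distrib)
    finally show ?thesis by simp
  qed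
  finally show ?case .
qed

lemma vdm_leibniz:
  fixes x :: "nat \<Rightarrow> 'a::comm_ring_1"
  shows "(\<Prod>j<n. \<Prod>i<j. (x j - x i)) = (\<Sum>p\<in>{p. p permutes {0..<n}}. signof p * (\<Prod>i<n. x i ^ p i))"
proof -
  have "det (mat n n (\<lambda>(i,j). x i ^ j)) = (\<Sum>p\<in>{p. p permutes {0..<n}}. signof p * (\<Prod>i = 0..<n. mat n n (\<lambda>(i,j). x i ^ j) $$ (i, p i)))"
    by (rule det_def') simp
  also have "\<dots> = (\<Sum>p\<in>{p. p permutes {0..<n}}. signof p * (\<Prod>i<n. x i ^ p i))"
  proof (rule sum.cong[OF refl])
    fix p assume "p \<in> {p. p permutes {0..<n}}"
    then have "p i < n" if "i < n" for i using that by (simp add: permutes_in_image)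
    then show "signof p * (\<Prod>i = 0..<n. mat n n (\<lambda>(i,j). x i ^ j) $$ (i, p i)) = signof p * (\<Prod>i<n. x i ^ p i)"
      by (simp add: atLeast0LessThan)
  qed
  finally show ?thesis by (simp add: vdm_det)
qed

lemma vdm_perm:
  fixes z :: "nat \<Rightarrow> 'a::comm_ring_1"
  assumes p: "p permutes {0..<n}"
  shows "(\<Prod>j<n. \<Prod>i<j. (z (p j) - z (p i))) = signof p * (\<Prod>j<n. \<Prod>i<j. (z j - z i))"
proof -
  let ?V = "mat n n (\<lambda>(i,j). z i ^ j)"
  have "mat n n (\<lambda>(i,j). z (p i) ^ j) = mat n n (\<lambda>(i,j). ?V $$ (p i, j))"
    using p by (intro eq_matI) (auto simp: permutes_in_image)
  then have "det (mat n n (\<lambda>(i,j). z (p i) ^ j)) = signof p * det ?V"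
    using det_permute_rows[of ?V n p] p by simp
  then show ?thesis by (simp add: vdm_det[where x="\<lambda>i. z (p i)"] vdm_det)
qed


definition pairs :: "nat \<Rightarrow> (nat \<times> nat) set" where
  "pairs n = {(i, j). 1 \<le> i \<and> i < j \<and> j \<le> n}"

lemma finite_pairs[simp]: "finite (pairs n)"
  by (rule finite_subset[of _ "{1..n} \<times> {1..n}"]) (auto simp: pairs_def)

lemma bij_pairs_Sigma:
  "bij_betw (\<lambda>(j, i). (Suc i, Suc j)) (SIGMA j:{..<n}. {..<j}) (pairs n)"
  by (rule bij_betw_byWitness[where f'="\<lambda>(i, j). (j - 1, i - 1)"]) (auto simp: pairs_def image_iff)

lemma pairs_nested:
  fixes g :: "nat \<Rightarrow> nat \<Rightarrow> 'a::comm_monoid_mult"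
  shows "(\<Prod>(i, j)\<in>pairs n. g i j) = (\<Prod>j<n. \<Prod>i<j. g (Suc i) (Suc j))"
proof -
  have "(\<Prod>j<n. \<Prod>i<j. g (Suc i) (Suc j)) = (\<Prod>(j, i)\<in>(SIGMA j:{..<n}. {..<j}). g (Suc i) (Suc j))"
    by (rule prod.Sigma) auto
  also have "\<dots> = (\<Prod>x\<in>(SIGMA j:{..<n}. {..<j}). (\<lambda>(i, j). g i j) ((\<lambda>(j, i). (Suc i, Suc j)) x))"
    by (rule prod.cong) auto
  also have "\<dots> = (\<Prod>(i, j)\<in>pairs n. g i j)"
    by (rule prod.reindex_bij_betw[OF bij_pairs_Sigma])
  finally show ?thesis by simp
qed

lemma pairs_rev:
  fixes g :: "nat \<Rightarrow> nat \<Rightarrow> 'a::comm_monoid_mult"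
  shows "(\<Prod>(i, j)\<in>pairs n. g i j) = (\<Prod>(i, j)\<in>pairs n. g (Suc n - j) (Suc n - i))"
proof -
  have bij: "bij_betw (\<lambda>(i, j). (Suc n - j, Suc n - i)) (pairs n) (pairs n)"
    by (rule bij_betw_byWitness[where f'="\<lambda>(i, j). (Suc n - j, Suc n - i)"]) (auto simp: pairs_def image_iff)
  have "(\<Prod>(i, j)\<in>pairs n. g (Suc n - j) (Suc n - i)) = (\<Prod>x\<in>pairs n. (\<lambda>(i, j). g i j) ((\<lambda>(i, j). (Suc n - j, Suc n - i)) x))"
    by (rule prod.cong) auto
  also have "\<dots> = (\<Prod>(i, j)\<in>pairs n. g i j)"
    by (rule prod.reindex_bij_betw[OF bij])
  finally show ?thesis by simp
qed

lemma sum_lessThan_choose2: "(\<Sum>j<n. j) = n choose 2"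
proof (induction n)
  case 0 then show ?case by simp
next
  case (Suc n)
  have "(Suc n choose 2) = (n choose 1) + (n choose 2)"
    by (simp add: numeral_2_eq_2)
  then show ?case using Suc by simp
qed

lemma card_pairs: "card (pairs n) = n choose 2"
proof -
  have "card (pairs n) = card (SIGMA j:{..<n}. {..<j})"
    using bij_betw_same_card[OF bij_pairs_Sigma] by simp
  also have "\<dots> = (\<Sum>j<n. j)" by (simp add: card_SigmaI)
  finally show ?thesis by (simp add: sum_lessThan_choose2)
qed

lemma var_power: "var i ^ e = Poly_Mapping.single (Poly_Mapping.single i e) 1"
proof (induction e)
  case 0 then show ?case by simp
next
  case (Suc e)
  then show ?case by (simp add: var_def mult_single single_add[symmetric] add.commute)
qed

lemma prod_singles: "(\<Prod>x\<in>S. Poly_Mapping.single (u x) (1::int)) = Poly_Mapping.single (\<Sum>x\<in>S. u x) 1"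
  by (induction S rule: infinite_finite_induct) (auto simp: mult_single)

lemma lookup_mult_single:
  fixes g :: mp
  assumes le: "\<And>i. Poly_Mapping.lookup u i \<le> Poly_Mapping.lookup w i"
  shows "Poly_Mapping.lookup (g * Poly_Mapping.single u 1) w = Poly_Mapping.lookup g (w - u)"
proof -
  have eq: "v + u = w \<longleftrightarrow> v = w - u" for v
  proof
    assume "v + u = w" then show "v = w - u" by (metis add_diff_cancel_right')
  next
    assume "v = w - u"
    then show "v + u = w"
      by (intro poly_mapping_eqI) (use le in \<open>simp add: lookup_add lookup_minus\<close>)
  qed
  show ?thesis
    using subset_UNIV
  proof (induction g rule: frag_induction)
    case zero then show ?case by simp
  next
    case (one x)
    have wu: "w - u + u = w"
      by (intro poly_mapping_eqI) (use le in \<open>simp add: lookup_add lookup_minus\<close>)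
    show ?case by (auto simp: mult_single lookup_single when_def eq wu)
  next
    case (diff a b)
    then show ?case by (simp add: left_diff_distrib lookup_minus)
  qed
qed

lemma lookup_of_int_mult: "Poly_Mapping.lookup (of_int c * (g :: mp)) w = c * Poly_Mapping.lookup g w"
proof -
  have "(of_int c :: mp) * g = Poly_Mapping.map ((*) c) g"
    by (simp add: mult_map_scale_conv_mult mp_of_int)
  then show ?thesis by (simp add: Poly_Mapping.map.rep_eq when_def)
qed

lemma sum_PiE_reindex:
  assumes tau: "bij_betw \<tau> I I"
  shows "(\<Sum>a\<in>PiE I (\<lambda>i. A (\<tau> i)). F a) = (\<Sum>b\<in>PiE I A. F (restrict (\<lambda>i. b (\<tau> i)) I))"
proof -
  let ?h = "\<lambda>b. restrict (\<lambda>i. b (\<tau> i)) I"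
  let ?h' = "\<lambda>a. restrict (\<lambda>j. a (inv_into I \<tau> j)) I"
  have tI: "\<tau> i \<in> I" if "i \<in> I" for i using tau that by (auto simp: bij_betw_def)
  have iI: "inv_into I \<tau> j \<in> I" if "j \<in> I" for j using tau that by (auto simp: bij_betw_def inv_into_into)
  have ti: "\<tau> (inv_into I \<tau> j) = j" if "j \<in> I" for j using tau that by (auto simp: bij_betw_def f_inv_into_f)
  have it: "inv_into I \<tau> (\<tau> i) = i" if "i \<in> I" for i using tau that by (auto simp: bij_betw_def inv_into_f_f)
  have "bij_betw ?h (PiE I A) (PiE I (\<lambda>i. A (\<tau> i)))"
  proof (rule bij_betw_byWitness[where f'="?h'"])
    show "\<forall>b\<in>PiE I A. ?h' (?h b) = b"
      by (auto simp: restrict_def fun_eq_iff iI ti PiE_def extensional_def)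
    show "\<forall>a\<in>PiE I (\<lambda>i. A (\<tau> i)). ?h (?h' a) = a"
      by (auto simp: restrict_def fun_eq_iff tI it PiE_def extensional_def)
    show "?h ` PiE I A \<subseteq> PiE I (\<lambda>i. A (\<tau> i))"
      by (auto simp: tI)
    show "?h' ` PiE I (\<lambda>i. A (\<tau> i)) \<subseteq> PiE I A"
    proof
      fix x assume "x \<in> ?h' ` PiE I (\<lambda>i. A (\<tau> i))"
      then obtain a where a: "a \<in> PiE I (\<lambda>i. A (\<tau> i))" "x = ?h' a" by blast
      have "a (inv_into I \<tau> j) \<in> A j" if "j \<in> I" for j
        using a(1) iI[OF that] ti[OF that] by (metis PiE_E)
      then show "x \<in> PiE I A" using a(2) by auto
    qed
  qed
  then show ?thesis by (rule sum.reindex_bij_betw[symmetric])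
qed

lemma phi_interval:
  assumes "c \<le> K"
  shows "phi (of_nat ` {0..K}) (of_nat c) = (-1) ^ (K - c) * fact c * fact (K - c)"
proof -
  have "phi (of_nat ` {0..K}) (of_nat c) = (\<Prod>b\<in>of_nat ` ({0..K} - {c}). of_nat c - b)"
    unfolding phi_def by (rule prod.cong) (auto simp: image_iff)
  also have "\<dots> = (\<Prod>l\<in>{0..K} - {c}. (of_nat c - of_nat l :: real))"
    by (subst prod.reindex) (auto simp: inj_on_def)
  also have "\<dots> = (-1) ^ (K - c) * fact c * fact (K - c)"
    using assms
  proof (induction K rule: dec_induct)
    case base
    have "{0..c} - {c} = {0..<c}" by auto
    then have "(\<Prod>l\<in>{0..c} - {c}. (of_nat c - of_nat l :: real)) = (\<Prod>l=0..<c. of_nat (c - l))"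
      by (auto intro!: prod.cong simp: of_nat_diff)
    also have "\<dots> = fact c" by (simp add: fact_prod_rev)
    finally show ?case by simp
  next
    case (step K)
    have "{0..Suc K} - {c} = insert (Suc K) ({0..K} - {c})" using step by auto
    then have "(\<Prod>l\<in>{0..Suc K} - {c}. (of_nat c - of_nat l :: real)) = (of_nat c - of_nat (Suc K)) * (\<Prod>l\<in>{0..K} - {c}. (of_nat c - of_nat l :: real))"
      by simp
    also have "\<dots> = (- of_nat (Suc K - c)) * ((-1) ^ (K - c) * fact c * fact (K - c))"
      using step by (simp add: of_nat_diff)
    also have "\<dots> = (-1) ^ (Suc K - c) * fact c * fact (Suc K - c)"
      using step by (simp add: Suc_diff_le fact_Suc algebra_simps)
    finally show ?case .
  qed
  finally show ?thesis .
qed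

lemma pair_antisym:
  fixes y :: "nat \<Rightarrow> real"
  assumes p: "p permutes {0..<n}"
  shows "(\<Prod>(i, j)\<in>pairs n. y (n - p (j - 1)) - y (n - p (i - 1)))
       = of_int (sign p) * (-1) ^ card (pairs n) * (\<Prod>(i, j)\<in>pairs n. y j - y i)"
proof -
  define z where "z l = y (n - l)" for l
  have "(\<Prod>(i, j)\<in>pairs n. y (n - p (j - 1)) - y (n - p (i - 1)))
      = (\<Prod>j<n. \<Prod>i<j. z (p j) - z (p i))"
    by (simp add: pairs_nested z_def)
  also have "\<dots> = of_int (sign p) * (\<Prod>j<n. \<Prod>i<j. z j - z i)"
    by (rule vdm_perm[OF p])
  also have "(\<Prod>j<n. \<Prod>i<j. z j - z i) = (\<Prod>(i, j)\<in>pairs n. z (j - 1) - z (i - 1))"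
    by (simp add: pairs_nested)
  also have "\<dots> = (\<Prod>(i, j)\<in>pairs n. y (Suc n - j) - y (Suc n - i))"
    by (rule prod.cong) (auto simp: z_def pairs_def Suc_diff_le)
  also have "\<dots> = (\<Prod>(i, j)\<in>pairs n. y i - y j)"
    by (subst pairs_rev) (rule prod.cong, auto simp: pairs_def)
  also have "\<dots> = (\<Prod>(i, j)\<in>pairs n. (-1) * (y j - y i))"
    by (rule prod.cong) auto
  also have "\<dots> = (\<Prod>x\<in>pairs n. (-1::real)) * (\<Prod>(i, j)\<in>pairs n. y j - y i)"
    unfolding case_prod_beta by (rule prod.distrib)
  also have "\<dots> = (-1) ^ card (pairs n) * (\<Prod>(i, j)\<in>pairs n. y j - y i)"
    by (simp add: prod_constant)
  finally show ?thesis by simp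
qed


lemma obtain_max:
  fixes z :: "nat \<Rightarrow> int"
  assumes "finite J" "J \<noteq> {}"
  obtains i where "i \<in> J" "\<And>j. j \<in> J \<Longrightarrow> z j \<le> z i"
proof -
  have "Max (z ` J) \<in> z ` J" using assms by simp
  then obtain i where "i \<in> J" "z i = Max (z ` J)" by auto
  then show ?thesis using assms that by auto
qed

lemma obtain_min:
  fixes z :: "nat \<Rightarrow> int"
  assumes "finite J" "J \<noteq> {}"
  obtains i where "i \<in> J" "\<And>j. j \<in> J \<Longrightarrow> z i \<le> z j"
proof -
  have "Min (z ` J) \<in> z ` J" using assms by simp
  then obtain i where "i \<in> J" "z i = Min (z ` J)" by auto
  then show ?thesis using assms that by auto
qed

lemma comb_upper:
  fixes z :: "nat \<Rightarrow> int" and m M :: int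
  assumes "finite J" "\<And>i j. i \<in> J \<Longrightarrow> j \<in> J \<Longrightarrow> i \<noteq> j \<Longrightarrow> m \<le> \<bar>z i - z j\<bar>"
    "\<And>i. i \<in> J \<Longrightarrow> z i \<le> M"
  shows "(\<Sum>i\<in>J. z i) \<le> (\<Sum>r<card J. M - int r * m)"
  using assms
proof (induction "card J" arbitrary: J M)
  case 0
  then show ?case by simp
next
  case (Suc c)
  then have ne: "J \<noteq> {}" by auto
  obtain i1 where i1: "i1 \<in> J" "\<And>j. j \<in> J \<Longrightarrow> z j \<le> z i1"
    using obtain_max[OF Suc.prems(1) ne] by blast
  let ?J' = "J - {i1}"
  have cJ': "card ?J' = c" using Suc.hyps(2) i1 Suc.prems(1) by simp
  have le: "z j \<le> M - m" if "j \<in> ?J'" for j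
  proof -
    have "m \<le> \<bar>z j - z i1\<bar>" using Suc.prems(2)[of j i1] that i1 by auto
    moreover have "z j \<le> z i1" using i1 that by auto
    ultimately show ?thesis using Suc.prems(3)[OF i1(1)] by linarith
  qed
  have IH: "(\<Sum>i\<in>?J'. z i) \<le> (\<Sum>r<c. (M - m) - int r * m)"
    using Suc.hyps(1)[of ?J' "M - m"] cJ' Suc.prems le by auto
  have "(\<Sum>i\<in>J. z i) = z i1 + (\<Sum>i\<in>?J'. z i)"
    using i1 Suc.prems(1) by (simp add: sum.remove)
  also have "\<dots> \<le> M + (\<Sum>r<c. (M - m) - int r * m)"
    using IH Suc.prems(3)[OF i1(1)] by linarith
  also have "\<dots> = (\<Sum>r<Suc c. M - int r * m)"
    unfolding sum.lessThan_Suc_shift by (simp add: algebra_simps)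
  finally show ?case using Suc.hyps(2) by simp
qed

lemma comb_lower:
  fixes z :: "nat \<Rightarrow> int" and m L :: int
  assumes "finite J" "\<And>i j. i \<in> J \<Longrightarrow> j \<in> J \<Longrightarrow> i \<noteq> j \<Longrightarrow> m \<le> \<bar>z i - z j\<bar>"
    "\<And>i. i \<in> J \<Longrightarrow> L \<le> z i"
  shows "(\<Sum>r<card J. L + int r * m) \<le> (\<Sum>i\<in>J. z i)"
proof -
  have "(\<Sum>i\<in>J. - z i) \<le> (\<Sum>r<card J. (- L) - int r * m)"
    by (rule comb_upper) (use assms in \<open>auto simp: abs_minus_commute\<close>)
  moreover have "(\<Sum>i\<in>J. - z i) = - (\<Sum>i\<in>J. z i)" by (simp add: sum_negf)
  moreover have "(\<Sum>r<card J. (- L) - int r * m) = - (\<Sum>r<card J. L + int r * m)"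
    by (simp add: sum_negf[symmetric])
  ultimately show ?thesis by linarith
qed

lemma comb_eq:
  fixes z :: "nat \<Rightarrow> int" and m M :: int
  assumes m: "1 \<le> m" and fin: "finite J"
    and asym: "\<And>i j. i \<in> J \<Longrightarrow> j \<in> J \<Longrightarrow> i < j \<Longrightarrow> z i + m + 1 \<le> z j \<or> z j + m \<le> z i"
    and ub: "\<And>i. i \<in> J \<Longrightarrow> z i \<le> M"
    and sum: "(\<Sum>i\<in>J. z i) = (\<Sum>r<card J. M - int r * m)"
  shows "\<forall>i\<in>J. z i = M - int (card {j\<in>J. j < i}) * m"
  using fin asym ub sum
proof (induction "card J" arbitrary: J M)
  case 0
  then show ?case by simp
next
  case (Suc c)
  then have ne: "J \<noteq> {}" by auto
  have sym: "m \<le> \<bar>z i - z j\<bar>" if "i \<in> J" "j \<in> J" "i \<noteq> j" for i j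
  proof (cases "i < j")
    case True then show ?thesis using Suc.prems(2)[of i j] that m by auto
  next
    case False then have "j < i" using that by simp
    then show ?thesis using Suc.prems(2)[of j i] that m by auto
  qed
  obtain i1 where i1: "i1 \<in> J" "\<And>j. j \<in> J \<Longrightarrow> z j \<le> z i1"
    using obtain_max[OF Suc.prems(1) ne] by blast
  let ?J' = "J - {i1}"
  have cJ': "card ?J' = c" using Suc.hyps(2) i1 Suc.prems(1) by simp
  have le: "z j \<le> M - m" if "j \<in> ?J'" for j
  proof -
    have "m \<le> \<bar>z j - z i1\<bar>" using sym[of j i1] that i1 by auto
    moreover have "z j \<le> z i1" using i1 that by auto
    ultimately show ?thesis using Suc.prems(3)[OF i1(1)] by linarith
  qed
  have bnd: "(\<Sum>i\<in>?J'. z i) \<le> (\<Sum>r<c. (M - m) - int r * m)"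
    using comb_upper[of ?J' m z "M - m"] cJ' Suc.prems(1) le sym by auto
  have split: "(\<Sum>i\<in>J. z i) = z i1 + (\<Sum>i\<in>?J'. z i)"
    using i1 Suc.prems(1) by (simp add: sum.remove)
  have rhs: "(\<Sum>r<Suc c. M - int r * m) = M + (\<Sum>r<c. (M - m) - int r * m)"
    unfolding sum.lessThan_Suc_shift by (simp add: algebra_simps)
  have tot: "z i1 + (\<Sum>i\<in>?J'. z i) = M + (\<Sum>r<c. (M - m) - int r * m)"
    using Suc.prems(4) Suc.hyps(2) split rhs by simp
  have zi1: "z i1 = M" using tot bnd Suc.prems(3)[OF i1(1)] by linarith
  have sJ': "(\<Sum>i\<in>?J'. z i) = (\<Sum>r<c. (M - m) - int r * m)"
    using tot zi1 by linarith
  have IH0: "\<forall>i\<in>?J'. z i = (M - m) - int (card {j\<in>?J'. j < i}) * m"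
    using Suc.hyps(1)[of ?J' "M - m"] cJ' Suc.prems(1,2) le sJ' by auto
  have IH: "z i = (M - m) - int (card {j\<in>?J'. j < i}) * m" if "i \<in> ?J'" for i
    using IH0 that by blast
  define i0 where "i0 = Min J"
  have i0: "i0 \<in> J" "\<And>j. j \<in> J \<Longrightarrow> i0 \<le> j"
    using ne Suc.prems(1) by (auto simp: i0_def)
  have "i1 = i0"
  proof (rule ccontr)
    assume ne01: "i1 \<noteq> i0"
    then have "i0 \<in> ?J'" using i0 by auto
    moreover have "{j\<in>?J'. j < i0} = {}" using i0 by force
    ultimately have "z i0 = M - m" using IH[of i0] by simp
    moreover have "i0 < i1" using i0(2)[OF i1(1)] ne01 by simp
    ultimately show False using Suc.prems(2)[OF i0(1) i1(1)] zi1 m by auto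
  qed
  show ?case
  proof
  fix i assume iJ: "i \<in> J"
  show "z i = M - int (card {j\<in>J. j < i}) * m"
  proof (cases "i = i0")
    case True
    have "{j\<in>J. j < i} = {}" using True i0 by force
    then show ?thesis using True zi1 \<open>i1 = i0\<close> by simp
  next
    case False
    then have iJ': "i \<in> ?J'" using iJ \<open>i1 = i0\<close> by simp
    have "i0 < i" using i0(2)[OF iJ] False by simp
    then have "{j\<in>J. j < i} = insert i0 {j\<in>?J'. j < i}" using i0(1) \<open>i1 = i0\<close> by auto
    moreover have "finite {j\<in>?J'. j < i}" using Suc.prems(1) by simp
    moreover have "i0 \<notin> {j\<in>?J'. j < i}" using \<open>i1 = i0\<close> by simp
    ultimately have "card {j\<in>J. j < i} = Suc (card {j\<in>?J'. j < i})" by simp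
    then show ?thesis using IH[OF iJ'] by (simp add: algebra_simps)
  qed
  qed
qed


definition NN :: "nat \<Rightarrow> nat \<Rightarrow> nat \<Rightarrow> nat" where
  "NN n m k = (k - 1) * n - m * n * (n - 1)"

definition Ssum :: "nat \<Rightarrow> mp" where
  "Ssum n = (\<Sum>i\<in>{1..n}. var i)"

definition fodd :: "nat \<Rightarrow> nat \<Rightarrow> nat \<Rightarrow> mp" where
  "fodd n m k = Ssum n ^ NN n m k * (\<Prod>(i, j)\<in>pairs n. (var j - var i) ^ (2 * m - 1))"

definition feven :: "nat \<Rightarrow> nat \<Rightarrow> nat \<Rightarrow> mp" where
  "feven n m k = Ssum n ^ NN n m k * (\<Prod>(i, j)\<in>pairs n. (var j - var i) ^ (2 * m))"

definition dd :: "nat \<Rightarrow> nat \<Rightarrow> nat \<Rightarrow> nat" where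
  "dd n k i = k - n + i - 1"

definition Bset :: "nat \<Rightarrow> real set" where
  "Bset e = of_nat ` {0..e}"

definition monp :: "(nat \<Rightarrow> nat) \<Rightarrow> nat \<Rightarrow> (nat \<Rightarrow>\<^sub>0 nat)" where
  "monp p n = (\<Sum>i<n. Poly_Mapping.single (Suc i) (p i))"

lemma finite_Bset[simp]: "finite (Bset e)" by (simp add: Bset_def)
lemma Bset_ne[simp]: "Bset e \<noteq> {}" by (simp add: Bset_def)
lemma card_Bset[simp]: "card (Bset e) = Suc e"
  by (simp add: Bset_def card_image inj_on_def)

lemma lookup_monomial_exps:
  "Poly_Mapping.lookup (monomial_exps n e) i = (if i \<in> {1..n} then e i else 0)"
  by (simp add: monomial_exps_def lookup_sum lookup_single when_def)

lemma keys_monomial_exps: "Poly_Mapping.keys (monomial_exps n e) \<subseteq> {1..n}"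
  by (auto simp: in_keys_iff lookup_monomial_exps split: if_splits)

lemma mdeg_monomial_exps: "mdeg (monomial_exps n e) = (\<Sum>i\<in>{1..n}. e i)"
  by (subst mdeg_superset[OF _ keys_monomial_exps]) (auto simp: lookup_monomial_exps)

lemma lookup_monp: "Poly_Mapping.lookup (monp p n) i = (if i \<in> {1..n} then p (i - 1) else 0)"
proof -
  have "Poly_Mapping.lookup (monp p n) i = (\<Sum>l<n. (p l when Suc l = i))"
    by (simp add: monp_def lookup_sum lookup_single)
  also have "\<dots> = (if i \<in> {1..n} then p (i - 1) else 0)"
  proof (cases "i \<in> {1..n}")
    case True
    then have "(\<Sum>l<n. (p l when Suc l = i)) = (\<Sum>l<n. (if l = i - 1 then p l else 0))"
      by (intro sum.cong) (auto simp: when_def)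
    also have "\<dots> = p (i - 1)" using True by auto
    finally show ?thesis using True by simp
  next
    case False
    then show ?thesis by (intro trans[OF sum.neutral]) (auto simp: when_def)
  qed
  finally show ?thesis .
qed

lemma mev_prod_pairs: "mev a (\<Prod>(i, j)\<in>S. g i j) = (\<Prod>(i, j)\<in>S. mev a (g i j))"
  by (simp add: mev_prod case_prod_beta)

lemma mev_fodd: "mev y (fodd n m k) = (\<Sum>i\<in>{1..n}. y i) ^ NN n m k * (\<Prod>(i, j)\<in>pairs n. (y j - y i) ^ (2 * m - 1))"
  by (simp add: fodd_def Ssum_def mev_mult mev_power mev_sum mev_prod_pairs mev_diff)

lemma vin_fodd: "vin {1..n} (fodd n m k)"
  unfolding fodd_def Ssum_def
  by (intro vin_mult vin_power vin_sum vin_prod) (auto simp: pairs_def intro!: vin_power vin_diff vin_var)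

lemma dle_fodd: "dle (NN n m k + (2 * m - 1) * card (pairs n)) (fodd n m k)"
proof -
  have a: "dle (NN n m k * 1) (Ssum n ^ NN n m k)"
    unfolding Ssum_def by (intro dle_power dle_sum dle_var)
  have b: "dle (\<Sum>x\<in>pairs n. (2 * m - 1) * 1) (\<Prod>(i, j)\<in>pairs n. (var j - var i) ^ (2 * m - 1))"
    unfolding case_prod_beta by (intro dle_prod dle_power dle_diff dle_var)
  show ?thesis using dle_mult[OF a b] by (simp add: fodd_def mult.commute)
qed

context
  fixes n m k :: nat
  assumes n: "0 < n" and m: "0 < m" and k: "m * (n - 1) < k"
begin

lemma n_le_k: "n \<le> k"
proof -
  have "n - 1 \<le> m * (n - 1)" using m by simp
  then show ?thesis using k n by linarith
qed

lemma two_choose: "2 * (n choose 2) = n * (n - 1)"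
proof -
  have "2 * (\<Sum>j<N. j) = N * (N - 1)" for N :: nat
  proof (induction N)
    case (Suc N) then show ?case by (cases N) (auto simp: algebra_simps)
  qed simp
  then show ?thesis by (simp add: sum_lessThan_choose2)
qed

lemma sum_dd: "(\<Sum>i\<in>{1..n}. dd n k i) = n * (k - n) + (n choose 2)"
proof -
  have "(\<Sum>i\<in>{1..n}. dd n k i) = (\<Sum>i<n. dd n k (Suc i))"
    by (rule sum.reindex_bij_witness[where i=Suc and j="\<lambda>i. i - 1"]) auto
  also have "\<dots> = (\<Sum>i<n. (k - n) + i)"
    using n_le_k by (intro sum.cong) (auto simp: dd_def)
  also have "\<dots> = n * (k - n) + (n choose 2)"
    by (simp add: sum.distrib sum_lessThan_choose2)
  finally show ?thesis .
qed

lemma NN_int: "int (NN n m k) = (int k - 1) * int n - int m * int n * (int n - 1)"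
proof -
  have km: "m * (n - 1) \<le> k - 1" using k by simp
  have le: "m * n * (n - 1) \<le> (k - 1) * n" using mult_le_mono1[OF km, of n] by (simp add: mult.commute mult.left_commute)
  have "int (NN n m k) = int ((k - 1) * n) - int (m * n * (n - 1))"
    unfolding NN_def using le by (rule of_nat_diff)
  also have "\<dots> = (int k - 1) * int n - int m * int n * (int n - 1)"
    using n k by (simp add: of_nat_diff)
  finally show ?thesis .
qed

lemma choose2_int: "2 * int (n choose 2) = int n * int n - int n"
proof -
  have "int (2 * (n choose 2)) = int (n * (n - 1))" using two_choose by simp
  then show ?thesis using n by (simp add: of_nat_diff algebra_simps)
qed

lemma arith_odd: "NN n m k + (2 * m - 1) * card (pairs n) = (\<Sum>i\<in>{1..n}. dd n k i)"
proof -
  let ?c = "n choose 2"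
  have c2: "2 * int ?c = int n * int n - int n" by (rule choose2_int)
  have di: "int (2 * m - 1) = 2 * int m - 1" using m by (simp add: of_nat_diff)
  have ri: "int (n * (k - n) + ?c) = int n * (int k - int n) + int ?c"
    using n_le_k by (simp add: of_nat_diff)
  have "int m * (2 * int ?c) = int m * (int n * int n - int n)" using c2 by simp
  then have mm: "int m * int n * (int n - 1) = int m * (2 * int ?c)" by (simp add: algebra_simps)
  have e1: "(int k - 1) * int n - int m * (2 * int ?c) + (2 * int m - 1) * int ?c = int n * int k - int n - int ?c"
    by (simp add: algebra_simps)
  have e2: "int n * (int k - int n) + int ?c = int n * int k - int n * int n + int ?c"
    by (simp add: algebra_simps)
  have "int (NN n m k + (2 * m - 1) * card (pairs n)) = (int k - 1) * int n - int m * (2 * int ?c) + (2 * int m - 1) * int ?c"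
    by (simp only: of_nat_add of_nat_mult NN_int di card_pairs mm)
  also have "\<dots> = int (n * (k - n) + ?c)"
    unfolding e1 ri e2 using c2 by linarith
  finally have "NN n m k + (2 * m - 1) * card (pairs n) = n * (k - n) + ?c"
    by (simp only: of_nat_eq_iff)
  then show ?thesis using sum_dd by simp
qed

lemma arith_even: "NN n m k * 1 + (\<Sum>x\<in>pairs n. 2 * m) = (\<Sum>i\<in>{1..n}. k - 1)"
proof -
  let ?c = "n choose 2"
  have c2: "2 * int ?c = int n * int n - int n" by (rule choose2_int)
  have "int (NN n m k * 1 + (\<Sum>x\<in>pairs n. 2 * m)) = (int k - 1) * int n - int m * int n * (int n - 1) + int m * (2 * int ?c)"
    by (simp add: NN_int card_pairs algebra_simps)
  also have "\<dots> = int ((\<Sum>i\<in>{1..n}. k - 1))"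
  proof -
    have "int m * (2 * int ?c) = int m * (int n * int n - int n)" using c2 by simp
    then show ?thesis using k by (simp add: of_nat_diff algebra_simps)
  qed
  finally show ?thesis by (simp only: of_nat_eq_iff)
qed

end


context
  fixes n m k :: nat
  assumes n: "0 < n" and m: "0 < m" and k: "m * (n - 1) < k"
begin

lemma tau_bij:
  assumes p: "p permutes {0..<n}"
  shows "bij_betw (\<lambda>i. n - p (i - 1)) {1..n} {1..n}"
proof (rule bij_betw_byWitness[where f'="\<lambda>j. Suc (inv_into UNIV p (n - j))"])
  have pin: "p x < n" if "x < n" for x using p that by (simp add: permutes_in_image)
  have ipin: "inv_into UNIV p x < n" if "x < n" for x
    using permutes_inv[OF p] that by (simp add: permutes_in_image)
  show "\<forall>i\<in>{1..n}. Suc (inv_into UNIV p (n - (n - p (i - 1)))) = i"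
  proof
    fix i assume i: "i \<in> {1..n}"
    then have "p (i - 1) < n" using pin by auto
    then have "n - (n - p (i - 1)) = p (i - 1)" by simp
    then show "Suc (inv_into UNIV p (n - (n - p (i - 1)))) = i" using i permutes_inverses(2)[OF p] by simp
  qed
  show "\<forall>j\<in>{1..n}. n - p (Suc (inv_into UNIV p (n - j)) - 1) = j"
    using permutes_inverses(1)[OF p] by auto
  show "(\<lambda>i. n - p (i - 1)) ` {1..n} \<subseteq> {1..n}"
  proof (rule image_subsetI)
    fix i assume "i \<in> {1..n}"
    then have "p (i - 1) < n" using pin by auto
    then show "n - p (i - 1) \<in> {1..n}" by auto
  qed
  show "(\<lambda>j. Suc (inv_into UNIV p (n - j))) ` {1..n} \<subseteq> {1..n}"
  proof (rule image_subsetI)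
    fix j assume "j \<in> {1..n}"
    then have "inv_into UNIV p (n - j) < n" using ipin by auto
    then show "Suc (inv_into UNIV p (n - j)) \<in> {1..n}" by auto
  qed
qed

lemma sign_pow_odd: "(of_int (sign p) * (-1::real) ^ c) ^ (2 * m - 1) = of_int (sign p) * (-1) ^ c"
proof -
  let ?e = "of_int (sign p) * (-1::real) ^ c"
  have sq: "?e * ?e = 1"
  proof -
    have s1: "(of_int (sign p)::real) * of_int (sign p) = 1"
      using of_int_mult[of "sign p" "sign p", symmetric] by simp
    have s2: "(-1::real) ^ c * (-1) ^ c = 1"
      by (simp flip: power_mult_distrib)
    have "?e * ?e = ((of_int (sign p)::real) * of_int (sign p)) * ((-1) ^ c * (-1) ^ c)"
      by (simp add: algebra_simps)
    then show ?thesis using s1 s2 by simp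
  qed
  have "2 * m - 1 = Suc (2 * (m - 1))" using m by simp
  then have "?e ^ (2 * m - 1) = ?e * (?e * ?e) ^ (m - 1)" by (simp add: power_mult power2_eq_square)
  then show ?thesis using sq by simp
qed

lemma mev_fodd_perm:
  assumes p: "p permutes {0..<n}"
  shows "mev (\<lambda>i. y (n - p (i - 1))) (fodd n m k) = of_int (sign p) * (-1) ^ card (pairs n) * mev y (fodd n m k)"
proof -
  have s: "(\<Sum>i\<in>{1..n}. y (n - p (i - 1))) = (\<Sum>i\<in>{1..n}. y i)"
    using sum.reindex_bij_betw[OF tau_bij[OF p], of y] by simp
  have "(\<Prod>(i, j)\<in>pairs n. (y (n - p (j - 1)) - y (n - p (i - 1))) ^ (2 * m - 1))
      = (\<Prod>(i, j)\<in>pairs n. y (n - p (j - 1)) - y (n - p (i - 1))) ^ (2 * m - 1)"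
    by (simp add: prod_power_distrib case_prod_beta)
  also have "\<dots> = (of_int (sign p) * (-1) ^ card (pairs n)) ^ (2 * m - 1) * (\<Prod>(i, j)\<in>pairs n. y j - y i) ^ (2 * m - 1)"
    by (simp only: pair_antisym[OF p] power_mult_distrib)
  also have "\<dots> = of_int (sign p) * (-1) ^ card (pairs n) * (\<Prod>(i, j)\<in>pairs n. y j - y i) ^ (2 * m - 1)"
    by (simp only: sign_pow_odd)
  also have "\<dots> = of_int (sign p) * (-1) ^ card (pairs n) * (\<Prod>(i, j)\<in>pairs n. (y j - y i) ^ (2 * m - 1))"
    by (simp add: prod_power_distrib case_prod_beta)
  finally have P: "(\<Prod>(i, j)\<in>pairs n. (y (n - p (j - 1)) - y (n - p (i - 1))) ^ (2 * m - 1))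
      = of_int (sign p) * (-1) ^ card (pairs n) * (\<Prod>(i, j)\<in>pairs n. (y j - y i) ^ (2 * m - 1))" .
  show ?thesis unfolding mev_fodd s P by (simp add: algebra_simps)
qed

lemma Emon_minus_monp:
  assumes p: "p permutes {0..<n}" and i: "i \<in> {1..n}"
  shows "Poly_Mapping.lookup (monomial_exps n (\<lambda>_. k - 1) - monp p n) i = dd n k (n - p (i - 1))"
proof -
  have "p (i - 1) < n" using p i by (auto simp: permutes_in_image)
  then show ?thesis using i n_le_k[OF n m k]
    by (simp add: lookup_minus lookup_monomial_exps lookup_monp dd_def)
qed

lemma monp_le:
  assumes p: "p permutes {0..<n}"
  shows "Poly_Mapping.lookup (monp p n) i \<le> Poly_Mapping.lookup (monomial_exps n (\<lambda>_. k - 1)) i"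
proof (cases "i \<in> {1..n}")
  case True
  then have "p (i - 1) < n" using p by (auto simp: permutes_in_image)
  then show ?thesis using True n_le_k[OF n m k] by (simp add: lookup_monomial_exps lookup_monp)
next
  case False then show ?thesis by (auto simp: lookup_monomial_exps lookup_monp)
qed

lemma coeff_fodd_perm:
  assumes p: "p permutes {0..<n}"
  shows "real_of_int (Poly_Mapping.lookup (fodd n m k) (monomial_exps n (\<lambda>_. k - 1) - monp p n))
       = of_int (sign p) * (-1) ^ card (pairs n) * of_int (Poly_Mapping.lookup (fodd n m k) (monomial_exps n (dd n k)))"
proof -
  let ?I = "{1..n}"
  let ?\<tau> = "\<lambda>i. n - p (i - 1)"
  let ?A = "\<lambda>j. Bset (dd n k j)"
  let ?\<epsilon> = "of_int (sign p) * (-1::real) ^ card (pairs n)"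
  have tb: "bij_betw ?\<tau> ?I ?I" by (rule tau_bij[OF p])
  have tI: "?\<tau> i \<in> ?I" if "i \<in> ?I" for i using tb that by (auto simp: bij_betw_def)
  have degsum: "(\<Sum>i\<in>?I. card (?A (?\<tau> i)) - 1) = (\<Sum>i\<in>?I. dd n k i)"
    using sum.reindex_bij_betw[OF tb, of "dd n k"] by simp
  have cns1: "real_of_int (Poly_Mapping.lookup (fodd n m k) (monomial_exps n (\<lambda>_. k - 1) - monp p n))
      = (\<Sum>a\<in>PiE ?I (\<lambda>i. ?A (?\<tau> i)). mev a (fodd n m k) / (\<Prod>i\<in>?I. phi (?A (?\<tau> i)) (a i)))"
  proof (rule cns)
    show "dle (\<Sum>i\<in>?I. card (?A (?\<tau> i)) - 1) (fodd n m k)"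
      unfolding degsum arith_odd[OF n m k, symmetric] by (rule dle_fodd)
    show "Poly_Mapping.lookup (monomial_exps n (\<lambda>_. k - 1) - monp p n) i = card (?A (?\<tau> i)) - 1"
      if "i \<in> ?I" for i
      using Emon_minus_monp[OF p that] by simp
    show "Poly_Mapping.keys (monomial_exps n (\<lambda>_. k - 1) - monp p n) \<subseteq> ?I"
      by (auto simp: in_keys_iff lookup_minus lookup_monomial_exps lookup_monp split: if_splits)
  qed (use vin_fodd[of n m k] in auto)
  also have "\<dots> = (\<Sum>b\<in>PiE ?I ?A. mev (restrict (\<lambda>i. b (?\<tau> i)) ?I) (fodd n m k) / (\<Prod>i\<in>?I. phi (?A (?\<tau> i)) (restrict (\<lambda>i. b (?\<tau> i)) ?I i)))"
    by (rule sum_PiE_reindex[OF tb])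
  also have "\<dots> = (\<Sum>b\<in>PiE ?I ?A. ?\<epsilon> * (mev b (fodd n m k) / (\<Prod>j\<in>?I. phi (?A j) (b j))))"
  proof (rule sum.cong[OF refl])
    fix b assume "b \<in> PiE ?I ?A"
    have "mev (restrict (\<lambda>i. b (?\<tau> i)) ?I) (fodd n m k) = mev (\<lambda>i. b (?\<tau> i)) (fodd n m k)"
      by (rule mev_cong[OF vin_fodd]) simp
    also have "\<dots> = ?\<epsilon> * mev b (fodd n m k)" by (rule mev_fodd_perm[OF p])
    finally have e1: "mev (restrict (\<lambda>i. b (?\<tau> i)) ?I) (fodd n m k) = ?\<epsilon> * mev b (fodd n m k)" .
    have "(\<Prod>i\<in>?I. phi (?A (?\<tau> i)) (restrict (\<lambda>i. b (?\<tau> i)) ?I i)) = (\<Prod>i\<in>?I. phi (?A (?\<tau> i)) (b (?\<tau> i)))"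
      by (rule prod.cong) auto
    also have "\<dots> = (\<Prod>j\<in>?I. phi (?A j) (b j))"
      by (rule prod.reindex_bij_betw[OF tb])
    finally show "mev (restrict (\<lambda>i. b (?\<tau> i)) ?I) (fodd n m k) / (\<Prod>i\<in>?I. phi (?A (?\<tau> i)) (restrict (\<lambda>i. b (?\<tau> i)) ?I i))
        = ?\<epsilon> * (mev b (fodd n m k) / (\<Prod>j\<in>?I. phi (?A j) (b j)))"
      using e1 by simp
  qed
  also have "\<dots> = ?\<epsilon> * (\<Sum>b\<in>PiE ?I ?A. mev b (fodd n m k) / (\<Prod>j\<in>?I. phi (?A j) (b j)))"
    by (simp add: sum_distrib_left)
  also have "(\<Sum>b\<in>PiE ?I ?A. mev b (fodd n m k) / (\<Prod>j\<in>?I. phi (?A j) (b j)))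
      = real_of_int (Poly_Mapping.lookup (fodd n m k) (monomial_exps n (dd n k)))"
  proof (rule cns[symmetric])
    show "dle (\<Sum>i\<in>?I. card (?A i) - 1) (fodd n m k)"
      using dle_fodd[of n m k] arith_odd[OF n m k] by simp
    show "Poly_Mapping.lookup (monomial_exps n (dd n k)) i = card (?A i) - 1" if "i \<in> ?I" for i
      using that by (simp add: lookup_monomial_exps)
  qed (use vin_fodd[of n m k] keys_monomial_exps[of n "dd n k"] in auto)
  finally show ?thesis .
qed

end


lemma Vp_expand:
  "(\<Prod>(i, j)\<in>pairs n. var j - var i) = (\<Sum>p\<in>{p. p permutes {0..<n}}. of_int (sign p) * Poly_Mapping.single (monp p n) 1)"
proof -
  have "(\<Prod>(i, j)\<in>pairs n. var j - var i) = (\<Prod>j<n. \<Prod>i<j. var (Suc j) - var (Suc i))"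
    by (rule pairs_nested)
  also have "\<dots> = (\<Sum>p\<in>{p. p permutes {0..<n}}. of_int (sign p) * (\<Prod>i<n. var (Suc i) ^ p i))"
    by (rule vdm_leibniz[where x="\<lambda>i. var (Suc i)"])
  also have "\<dots> = (\<Sum>p\<in>{p. p permutes {0..<n}}. of_int (sign p) * Poly_Mapping.single (monp p n) 1)"
    by (simp add: var_power prod_singles monp_def)
  finally show ?thesis .
qed

lemma feven_fodd:
  assumes m: "0 < m"
  shows "feven n m k = fodd n m k * (\<Prod>(i, j)\<in>pairs n. var j - var i)"
proof -
  have "(\<Prod>(i, j)\<in>pairs n. (var j - var i) ^ (2 * m)) = (\<Prod>(i, j)\<in>pairs n. (var j - var i) ^ (2 * m - 1) * (var j - var i))"
  proof (rule prod.cong[OF refl])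
    fix x :: "nat \<times> nat"
    have e: "2 * m = Suc (2 * m - 1)" using m by simp
    show "(case x of (i, j) \<Rightarrow> (var j - var i) ^ (2 * m)) = (case x of (i, j) \<Rightarrow> (var j - var i) ^ (2 * m - 1) * (var j - var i))"
      by (cases x) (simp only: prod.case, subst e, simp only: power_Suc mult.commute)
  qed
  also have "\<dots> = (\<Prod>(i, j)\<in>pairs n. (var j - var i) ^ (2 * m - 1)) * (\<Prod>(i, j)\<in>pairs n. var j - var i)"
    unfolding case_prod_beta by (rule prod.distrib)
  finally show ?thesis by (simp add: feven_def fodd_def mult.assoc)
qed

context
  fixes n m k :: nat
  assumes n: "0 < n" and m: "0 < m" and k: "m * (n - 1) < k"
begin

lemma coeff_feven_sym:
  "real_of_int (Poly_Mapping.lookup (feven n m k) (monomial_exps n (\<lambda>_. k - 1)))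
    = fact n * (-1) ^ card (pairs n) * of_int (Poly_Mapping.lookup (fodd n m k) (monomial_exps n (dd n k)))"
proof -
  let ?E = "monomial_exps n (\<lambda>_. k - 1)"
  let ?P = "{p. p permutes {0..<n}}"
  let ?C = "real_of_int (Poly_Mapping.lookup (fodd n m k) (monomial_exps n (dd n k)))"
  have "Poly_Mapping.lookup (feven n m k) ?E
      = (\<Sum>p\<in>?P. sign p * Poly_Mapping.lookup (fodd n m k * Poly_Mapping.single (monp p n) 1) ?E)"
    by (simp add: feven_fodd[OF m] Vp_expand sum_distrib_left lookup_sum mult.left_commute[of "fodd n m k"] lookup_of_int_mult)
  also have "\<dots> = (\<Sum>p\<in>?P. sign p * Poly_Mapping.lookup (fodd n m k) (?E - monp p n))"
  proof (rule sum.cong[OF refl])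
    fix p assume "p \<in> ?P"
    then have p: "p permutes {0..<n}" by simp
    have "Poly_Mapping.lookup (fodd n m k * Poly_Mapping.single (monp p n) 1) ?E = Poly_Mapping.lookup (fodd n m k) (?E - monp p n)"
      by (rule lookup_mult_single) (rule monp_le[OF n m k p])
    then show "sign p * Poly_Mapping.lookup (fodd n m k * Poly_Mapping.single (monp p n) 1) ?E = sign p * Poly_Mapping.lookup (fodd n m k) (?E - monp p n)"
      by simp
  qed
  finally have "real_of_int (Poly_Mapping.lookup (feven n m k) ?E)
      = (\<Sum>p\<in>?P. of_int (sign p) * real_of_int (Poly_Mapping.lookup (fodd n m k) (?E - monp p n)))"
    by simp
  also have "\<dots> = (\<Sum>p\<in>?P. (-1) ^ card (pairs n) * ?C)"
  proof (rule sum.cong[OF refl])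
    fix p assume "p \<in> ?P"
    then have p: "p permutes {0..<n}" by simp
    have s1: "(of_int (sign p)::real) * of_int (sign p) = 1"
      using of_int_mult[of "sign p" "sign p", symmetric] by simp
    show "of_int (sign p) * real_of_int (Poly_Mapping.lookup (fodd n m k) (?E - monp p n)) = (-1) ^ card (pairs n) * ?C"
      unfolding coeff_fodd_perm[OF n m k p] using s1 by (simp add: algebra_simps)
  qed
  also have "\<dots> = fact n * (-1) ^ card (pairs n) * ?C"
    by (simp add: card_permutations)
  finally show ?thesis .
qed

end


definition s0 :: "nat \<Rightarrow> nat \<Rightarrow> int" where
  "s0 n m = (\<Sum>r<n. int r * int m)"

definition Gp :: "nat \<Rightarrow> nat \<Rightarrow> nat \<Rightarrow> mp" where
  "Gp n m k = (\<Prod>u<NN n m k. Ssum n - of_int (s0 n m + int u))"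

definition Qp :: "nat \<Rightarrow> nat \<Rightarrow> mp" where
  "Qp n m = (\<Prod>(i, j)\<in>pairs n. \<Prod>t<2 * m. var j - var i - of_int (int t - int m + 1))"

definition FF :: "nat \<Rightarrow> nat \<Rightarrow> nat \<Rightarrow> mp" where
  "FF n m k = Gp n m k * Qp n m"

lemma teq_Gp: "teq (NN n m k * 1) (Gp n m k) (Ssum n ^ NN n m k)"
proof -
  have d: "dle 1 (Ssum n)" unfolding Ssum_def by (intro dle_sum dle_var)
  have "teq (\<Sum>u<NN n m k. 1) (\<Prod>u<NN n m k. Ssum n - of_int (s0 n m + int u)) (\<Prod>u<NN n m k. Ssum n)"
    by (rule teq_prod) (rule teq_shift[OF d])
  then show ?thesis by (simp add: Gp_def)
qed

lemma teq_Qp: "teq (\<Sum>x\<in>pairs n. 2 * m) (Qp n m) (\<Prod>(i, j)\<in>pairs n. (var j - var i) ^ (2 * m))"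
proof -
  have inner: "teq (2 * m) (\<Prod>t<2 * m. var j - var i - of_int (int t - int m + 1)) ((var j - var i) ^ (2 * m))" for i j
  proof -
    have d: "dle 1 (var j - var i)" by (intro dle_diff dle_var)
    have "teq (\<Sum>t<2 * m. 1) (\<Prod>t<2 * m. var j - var i - of_int (int t - int m + 1)) (\<Prod>t<2 * m. var j - var i)"
      by (rule teq_prod) (rule teq_shift[OF d])
    then show ?thesis by simp
  qed
  show ?thesis
    unfolding Qp_def case_prod_beta by (rule teq_prod) (rule inner)
qed

lemma teq_FF: "teq (NN n m k * 1 + (\<Sum>x\<in>pairs n. 2 * m)) (FF n m k) (feven n m k)"
  unfolding FF_def feven_def by (rule teq_mult[OF teq_Gp teq_Qp])

lemma vin_FF: "vin {1..n} (FF n m k)"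
  unfolding FF_def Gp_def Qp_def Ssum_def case_prod_beta
  by (intro vin_mult vin_prod vin_diff vin_sum vin_of_int) (auto simp: pairs_def intro!: vin_var)

lemma mev_FF: "mev a (FF n m k) = (\<Prod>u<NN n m k. (\<Sum>i\<in>{1..n}. a i) - of_int (s0 n m + int u))
   * (\<Prod>(i, j)\<in>pairs n. \<Prod>t<2 * m. a j - a i - of_int (int t - int m + 1))"
  by (simp add: FF_def Gp_def Qp_def Ssum_def mev_mult mev_prod mev_diff mev_sum mev_add case_prod_beta)


definition astar :: "nat \<Rightarrow> nat \<Rightarrow> nat \<Rightarrow> nat \<Rightarrow> real" where
  "astar n m k = restrict (\<lambda>i. real (k - 1 - (i - 1) * m)) {1..n}"

context
  fixes n m k :: nat
  assumes n: "0 < n" and m: "0 < m" and k: "m * (n - 1) < k"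
begin

lemma Smax_eq: "(\<Sum>r<n. int (k - 1) - int r * int m) = s0 n m + int (NN n m k)"
proof -
  have c2: "2 * int (n choose 2) = int n * int n - int n" by (rule choose2_int[OF n m k])
  have sr: "(\<Sum>r<n. int r) = int (n choose 2)"
    by (simp add: sum_lessThan_choose2 flip: of_nat_sum)
  have "(\<Sum>r<n. int (k - 1) - int r * int m) = int n * int (k - 1) - int m * int (n choose 2)"
    by (simp add: sum_subtractf sum_distrib_right[symmetric] sr mult.commute)
  moreover have "s0 n m = int m * int (n choose 2)"
    by (simp add: s0_def sum_distrib_right[symmetric] sr mult.commute)
  moreover have "int (NN n m k) = (int k - 1) * int n - int m * int n * (int n - 1)"
    by (rule NN_int[OF n m k])
  moreover have "int (k - 1) = int k - 1" using k by simp
  moreover have "int m * int n * (int n - 1) = int m * (2 * int (n choose 2))"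
  proof -
    have "int m * (2 * int (n choose 2)) = int m * (int n * int n - int n)" using c2 by simp
    then show ?thesis by (simp add: algebra_simps)
  qed
  ultimately show ?thesis by (simp add: algebra_simps)
qed

lemma card_below: "i \<in> {1..n} \<Longrightarrow> card {j\<in>{1..n}. j < i} = i - 1"
proof -
  assume "i \<in> {1..n}"
  then have "{j\<in>{1..n}. j < i} = {1..<i}" by auto
  then show ?thesis by simp
qed

lemma survivor:
  assumes a: "a \<in> PiE {1..n} (\<lambda>_. Bset (k - 1))" and nz: "mev a (FF n m k) \<noteq> 0"
  shows "a = astar n m k"
proof -
  let ?I = "{1..n}"
  define z where "z i = \<lfloor>a i\<rfloor>" for i
  have az: "a i = of_int (z i) \<and> 0 \<le> z i \<and> z i \<le> int (k - 1)" if "i \<in> ?I" for i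
  proof -
    from a that have "a i \<in> Bset (k - 1)" by auto
    then obtain c where "a i = real c" "c \<le> k - 1" by (auto simp: Bset_def)
    then show ?thesis by (simp add: z_def)
  qed
  have sa: "(\<Sum>i\<in>?I. a i) = of_int (\<Sum>i\<in>?I. z i)"
    using az by (simp add: of_int_sum)
  from nz have f1: "(\<Prod>u<NN n m k. (\<Sum>i\<in>?I. a i) - of_int (s0 n m + int u)) \<noteq> 0"
    and f2: "(\<Prod>(i, j)\<in>pairs n. \<Prod>t<2 * m. a j - a i - of_int (int t - int m + 1)) \<noteq> 0"
    by (auto simp: mev_FF)
  have hs: "(\<Sum>i\<in>?I. z i) \<noteq> s0 n m + int u" if "u < NN n m k" for u
  proof
    assume "(\<Sum>i\<in>?I. z i) = s0 n m + int u"
    then have "(\<Sum>i\<in>?I. a i) - of_int (s0 n m + int u) = 0" using sa by simp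
    then show False using f1 that by (simp add: prod_zero_iff)
  qed
  have hp: "z j - z i \<noteq> int t - int m + 1" if "(i, j) \<in> pairs n" "t < 2 * m" for i j t
  proof
    assume "z j - z i = int t - int m + 1"
    moreover have "i \<in> ?I" "j \<in> ?I" using that by (auto simp: pairs_def)
    ultimately have "a j - a i - of_int (int t - int m + 1) = 0" using az by simp
    then have "(\<Prod>t<2 * m. a j - a i - of_int (int t - int m + 1)) = 0"
      using that(2) by (intro prod_zero) auto
    then show False using f2 that(1) by (simp add: prod_zero_iff case_prod_beta) (metis fst_conv snd_conv)
  qed
  have asym: "z i + int m + 1 \<le> z j \<or> z j + int m \<le> z i" if "i \<in> ?I" "j \<in> ?I" "i < j" for i j
  proof (rule ccontr)
    assume "\<not> ?thesis"
    then have r: "- int m + 1 \<le> z j - z i" "z j - z i \<le> int m" by auto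
    define t where "t = nat (z j - z i + int m - 1)"
    have "t < 2 * m" using r by (simp add: t_def)
    moreover have "int t = z j - z i + int m - 1" using r by (simp add: t_def)
    moreover have "(i, j) \<in> pairs n" using that by (auto simp: pairs_def)
    ultimately show False using hp[of i j t] by simp
  qed
  have sym: "int m \<le> \<bar>z i - z j\<bar>" if "i \<in> ?I" "j \<in> ?I" "i \<noteq> j" for i j
  proof (cases "i < j")
    case True then show ?thesis using asym[OF that(1,2) True] by auto
  next
    case False then have "j < i" using that by simp
    then show ?thesis using asym[OF that(2,1)] by auto
  qed
  have up: "(\<Sum>i\<in>?I. z i) \<le> (\<Sum>r<card ?I. int (k - 1) - int r * int m)"
    by (rule comb_upper) (use sym az in auto)
  have lo: "(\<Sum>r<card ?I. 0 + int r * int m) \<le> (\<Sum>i\<in>?I. z i)"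
    by (rule comb_lower) (use sym az in auto)
  have lo': "s0 n m \<le> (\<Sum>i\<in>?I. z i)" using lo by (simp add: s0_def)
  have up': "(\<Sum>i\<in>?I. z i) \<le> s0 n m + int (NN n m k)" using up Smax_eq by simp
  have eqs: "(\<Sum>i\<in>?I. z i) = s0 n m + int (NN n m k)"
  proof (rule ccontr)
    assume "\<not> ?thesis"
    then have "(\<Sum>i\<in>?I. z i) < s0 n m + int (NN n m k)" using up' by simp
    then have "nat ((\<Sum>i\<in>?I. z i) - s0 n m) < NN n m k" using lo' by simp
    then show False using hs[of "nat ((\<Sum>i\<in>?I. z i) - s0 n m)"] lo' by simp
  qed
  have zeq: "\<forall>i\<in>?I. z i = int (k - 1) - int (card {j\<in>?I. j < i}) * int m"
    by (rule comb_eq[where m="int m"]) (use m asym az eqs Smax_eq in auto)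
  show "a = astar n m k"
  proof
    fix i
    show "a i = astar n m k i"
    proof (cases "i \<in> ?I")
      case True
      have im: "(i - 1) * m \<le> k - 1"
      proof -
        have "i - 1 \<le> n - 1" using True by auto
        then have "(i - 1) * m \<le> (n - 1) * m" by (rule mult_le_mono1)
        moreover have "(n - 1) * m \<le> k - 1" using k by (simp add: mult.commute)
        ultimately show ?thesis by (rule order.trans)
      qed
      have "z i = int (k - 1) - int (i - 1) * int m" using zeq True card_below[OF True] by simp
      moreover have "a i = real_of_int (z i)" using az[OF True] by blast
      ultimately have "a i = real (k - 1) - real (i - 1) * real m"
        by (simp only: of_int_diff of_int_mult of_int_of_nat_eq)
      moreover have "real (k - 1 - (i - 1) * m) = real (k - 1) - real (i - 1) * real m"
        by (simp only: of_nat_diff[OF im] of_nat_mult)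
      ultimately have ai: "a i = real (k - 1 - (i - 1) * m)" by linarith
      have "astar n m k i = real (k - 1 - (i - 1) * m)"
        unfolding astar_def by (rule restrict_apply'[OF True])
      then show ?thesis using ai by simp
    next
      case False
      have "astar n m k i = undefined" unfolding astar_def restrict_apply by (rule if_not_P[OF False])
      moreover have "a i = undefined" using a False by (rule PiE_arb)
      ultimately show ?thesis by simp
    qed
  qed
qed

end


lemma prod_shift_fact: "(\<Prod>t<L. real (a + 1 + t)) = fact (a + L) / fact a"
proof (induction L)
  case 0 then show ?case by simp
next
  case (Suc L)
  have "(\<Prod>t<Suc L. real (a + 1 + t)) = (\<Prod>t<L. real (a + 1 + t)) * real (a + 1 + L)" by simp
  also have "\<dots> = fact (a + L) / fact a * real (Suc (a + L))" using Suc by simp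
  also have "\<dots> = fact (Suc (a + L)) / fact a" by (simp only: fact_Suc) (simp add: field_simps)
  finally show ?case by simp
qed

lemma telescope_inner:
  fixes g :: "nat \<Rightarrow> real"
  assumes nz: "\<And>d. g d \<noteq> 0"
  shows "(\<Prod>d\<in>{1..j}. g (d + 1) / g (d - 1)) = g (j + 1) * g j / (g 1 * g 0)"
proof (induction j)
  case 0 then show ?case using nz by simp
next
  case (Suc j)
  have "{1..Suc j} = insert (Suc j) {1..j}" by auto
  then have "(\<Prod>d\<in>{1..Suc j}. g (d + 1) / g (d - 1)) = g (Suc j + 1) / g j * (\<Prod>d\<in>{1..j}. g (d + 1) / g (d - 1))"
    by simp
  also have "\<dots> = g (Suc j + 1) * g (Suc j) / (g 1 * g 0)"
    using Suc nz by (simp add: field_simps)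
  finally show ?case by simp
qed

lemma telescope_pairs:
  fixes g :: "nat \<Rightarrow> real"
  assumes nz: "\<And>d. g d \<noteq> 0"
  shows "(\<Prod>(i, j)\<in>pairs n. g (j - i + 1) / g (j - i - 1)) = (\<Prod>j<n. g (j + 1) * g j / (g 1 * g 0))"
proof -
  have "(\<Prod>(i, j)\<in>pairs n. g (j - i + 1) / g (j - i - 1)) = (\<Prod>j<n. \<Prod>i<j. g (Suc j - Suc i + 1) / g (Suc j - Suc i - 1))"
    by (rule pairs_nested)
  also have "\<dots> = (\<Prod>j<n. \<Prod>d\<in>{1..j}. g (d + 1) / g (d - 1))"
  proof (rule prod.cong[OF refl])
    fix j
    show "(\<Prod>i<j. g (Suc j - Suc i + 1) / g (Suc j - Suc i - 1)) = (\<Prod>d\<in>{1..j}. g (d + 1) / g (d - 1))"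
      by (rule prod.reindex_bij_witness[where i="\<lambda>d. j - d" and j="\<lambda>i. j - i"]) auto
  qed
  also have "\<dots> = (\<Prod>j<n. g (j + 1) * g j / (g 1 * g 0))"
    by (rule prod.cong[OF refl]) (rule telescope_inner[OF nz])
  finally show ?thesis .
qed

context
  fixes n m k :: nat
  assumes n: "0 < n" and m: "0 < m" and k: "m * (n - 1) < k"
begin

lemma im_le: "i \<in> {1..n} \<Longrightarrow> (i - 1) * m \<le> k - 1"
proof -
  assume i: "i \<in> {1..n}"
  have "i - 1 \<le> n - 1" using i by auto
  then have "(i - 1) * m \<le> (n - 1) * m" by (rule mult_le_mono1)
  moreover have "(n - 1) * m \<le> k - 1" using k by (simp add: mult.commute)
  ultimately show ?thesis by (rule order.trans)
qed

lemma astar_in: "astar n m k \<in> PiE {1..n} (\<lambda>_. Bset (k - 1))"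
proof -
  have "real (k - 1 - (i - 1) * m) \<in> Bset (k - 1)" for i
    by (auto simp: Bset_def)
  then show ?thesis unfolding astar_def restrict_PiE_iff by blast
qed

lemma astar_val: "i \<in> {1..n} \<Longrightarrow> astar n m k i = real (k - 1 - (i - 1) * m)"
  by (simp add: astar_def)

lemma coeffE_FF:
  "real_of_int (Poly_Mapping.lookup (feven n m k) (monomial_exps n (\<lambda>_. k - 1)))
     = mev (astar n m k) (FF n m k) / (\<Prod>i\<in>{1..n}. phi (Bset (k - 1)) (astar n m k i))"
proof -
  let ?I = "{1..n}"
  let ?E = "monomial_exps n (\<lambda>_. k - 1)"
  let ?h = "\<lambda>a. mev a (FF n m k) / (\<Prod>i\<in>?I. phi (Bset (k - 1)) (a i))"
  have te: "teq (\<Sum>i\<in>?I. k - 1) (FF n m k) (feven n m k)"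
    using teq_FF[of n m k] arith_even[OF n m k] by simp
  have "Poly_Mapping.lookup (FF n m k) ?E = Poly_Mapping.lookup (feven n m k) ?E"
    by (rule teq_coeff[OF te]) (simp add: mdeg_monomial_exps)
  then have "real_of_int (Poly_Mapping.lookup (feven n m k) ?E) = real_of_int (Poly_Mapping.lookup (FF n m k) ?E)"
    by simp
  also have "\<dots> = (\<Sum>a\<in>PiE ?I (\<lambda>_. Bset (k - 1)). ?h a)"
  proof (rule cns)
    show "dle (\<Sum>i\<in>?I. card (Bset (k - 1)) - 1) (FF n m k)" using te by (simp add: teq_def)
  qed (use vin_FF[of n m k] keys_monomial_exps[of n "\<lambda>_. k - 1"] in \<open>auto simp: lookup_monomial_exps\<close>)
  also have "\<dots> = (\<Sum>a\<in>{astar n m k}. ?h a)"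
  proof (rule sum.mono_neutral_right)
    show "\<forall>a\<in>PiE ?I (\<lambda>_. Bset (k - 1)) - {astar n m k}. ?h a = 0"
    proof
      fix a assume "a \<in> PiE ?I (\<lambda>_. Bset (k - 1)) - {astar n m k}"
      then have "mev a (FF n m k) = 0" using survivor[OF n m k] by blast
      then show "?h a = 0" by simp
    qed
  qed (use astar_in in \<open>auto simp: finite_PiE\<close>)
  also have "\<dots> = ?h (astar n m k)" by simp
  finally show ?thesis .
qed

lemma sum_astar: "(\<Sum>i\<in>{1..n}. astar n m k i) = of_int (s0 n m + int (NN n m k))"
proof -
  have "(\<Sum>i\<in>{1..n}. astar n m k i) = (\<Sum>i\<in>{1..n}. real_of_int (int (k - 1) - int (i - 1) * int m))"
  proof (rule sum.cong[OF refl])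
    fix i assume i: "i \<in> {1..n}"
    have "real (k - 1 - (i - 1) * m) = real (k - 1) - real ((i - 1) * m)"
      by (rule of_nat_diff[OF im_le[OF i]])
    then show "astar n m k i = real_of_int (int (k - 1) - int (i - 1) * int m)"
      using astar_val[OF i] by simp
  qed
  also have "\<dots> = (\<Sum>r<n. real_of_int (int (k - 1) - int r * int m))"
    by (rule sum.reindex_bij_witness[where i=Suc and j="\<lambda>i. i - 1"]) auto
  also have "\<dots> = of_int (\<Sum>r<n. int (k - 1) - int r * int m)"
    by (simp only: of_int_sum)
  also have "\<dots> = of_int (s0 n m + int (NN n m k))"
    by (simp only: Smax_eq[OF n m k])
  finally show ?thesis .
qed

lemma G_astar: "(\<Prod>u<NN n m k. (\<Sum>i\<in>{1..n}. astar n m k i) - of_int (s0 n m + int u)) = fact (NN n m k)"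
proof -
  have "(\<Prod>u<NN n m k. (\<Sum>i\<in>{1..n}. astar n m k i) - of_int (s0 n m + int u)) = (\<Prod>u<NN n m k. real (NN n m k - u))"
  proof (rule prod.cong[OF refl])
    fix u assume "u \<in> {..<NN n m k}"
    then have "u \<le> NN n m k" by simp
    then show "(\<Sum>i\<in>{1..n}. astar n m k i) - of_int (s0 n m + int u) = real (NN n m k - u)"
      unfolding sum_astar by (simp add: of_nat_diff)
  qed
  also have "\<dots> = fact (NN n m k)"
    by (simp add: fact_prod_rev atLeast0LessThan)
  finally show ?thesis .
qed

lemma Q_astar_pair:
  assumes ij: "(i, j) \<in> pairs n"
  shows "(\<Prod>t<2 * m. astar n m k j - astar n m k i - of_int (int t - int m + 1))
       = fact ((j - i + 1) * m) / fact ((j - i - 1) * m)"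
proof -
  have i: "i \<in> {1..n}" and j: "j \<in> {1..n}" and lt: "i < j" using ij by (auto simp: pairs_def)
  have dif: "astar n m k j - astar n m k i = - (real (j - i) * real m)"
  proof -
    have ai: "astar n m k i = real (k - 1) - real (i - 1) * real m"
      using astar_val[OF i] of_nat_diff[OF im_le[OF i], where 'a=real] by simp
    have aj: "astar n m k j = real (k - 1) - real (j - 1) * real m"
      using astar_val[OF j] of_nat_diff[OF im_le[OF j], where 'a=real] by simp
    have "j - 1 = (i - 1) + (j - i)" using lt i by auto
    then have e: "real (j - 1) = real (i - 1) + real (j - i)" by (metis of_nat_add)
    show ?thesis unfolding ai aj e by (simp add: algebra_simps)
  qed
  have "(\<Prod>t<2 * m. astar n m k j - astar n m k i - of_int (int t - int m + 1))
      = (\<Prod>t<2 * m. (-1) * real ((j - i - 1) * m + 1 + t))"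
  proof (rule prod.cong[OF refl])
    fix t assume "t \<in> {..<2 * m}"
    have jj: "real (j - i) = real (j - i - 1) + 1" using lt by (simp add: of_nat_diff)
    have L1: "real_of_int (int t - int m + 1) = real t - real m + 1" by simp
    have R1: "real ((j - i - 1) * m + 1 + t) = real (j - i - 1) * real m + 1 + real t"
      by (simp only: of_nat_add of_nat_mult of_nat_1)
    have ring: "\<And>x M T :: real. - ((x + 1) * M) - (T - M + 1) = (-1) * (x * M + 1 + T)"
      by (simp add: algebra_simps)
    show "astar n m k j - astar n m k i - of_int (int t - int m + 1) = (-1) * real ((j - i - 1) * m + 1 + t)"
      unfolding dif jj L1 R1 by (rule ring)
  qed
  also have "\<dots> = (-1) ^ (2 * m) * (\<Prod>t<2 * m. real ((j - i - 1) * m + 1 + t))"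
    by (simp only: prod.distrib prod_constant card_lessThan)
  also have "\<dots> = (-1) ^ (2 * m) * (fact ((j - i - 1) * m + 2 * m) / fact ((j - i - 1) * m))"
    by (simp only: prod_shift_fact)
  also have "\<dots> = fact ((j - i - 1) * m + 2 * m) / fact ((j - i - 1) * m)"
    by (simp add: power_mult)
  also have "(j - i - 1) * m + 2 * m = (j - i + 1) * m"
  proof -
    have "(j - i - 1) + 2 = j - i + 1" using lt by simp
    then show ?thesis by (metis add_mult_distrib)
  qed
  finally show ?thesis .
qed

lemma phi_astar:
  assumes i: "i \<in> {1..n}"
  shows "phi (Bset (k - 1)) (astar n m k i) = (-1) ^ ((i - 1) * m) * fact (k - 1 - (i - 1) * m) * fact ((i - 1) * m)"
proof -
  have c: "k - 1 - (i - 1) * m \<le> k - 1" by simp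
  have "k - 1 - (k - 1 - (i - 1) * m) = (i - 1) * m" using im_le[OF i] by simp
  then show ?thesis
    using phi_interval[OF c] astar_val[OF i] by (simp add: Bset_def)
qed

end


context
  fixes n m k :: nat
  assumes n: "0 < n" and m: "0 < m" and k: "m * (n - 1) < k"
begin

lemma mev_astar_FF:
  "mev (astar n m k) (FF n m k) = fact (NN n m k) * (\<Prod>(i, j)\<in>pairs n. fact ((j - i + 1) * m) / fact ((j - i - 1) * m))"
proof -
  have "(\<Prod>(i, j)\<in>pairs n. \<Prod>t<2 * m. astar n m k j - astar n m k i - of_int (int t - int m + 1))
      = (\<Prod>(i, j)\<in>pairs n. fact ((j - i + 1) * m) / fact ((j - i - 1) * m))"
  proof (rule prod.cong[OF refl])
    fix x assume "x \<in> pairs n"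
    then obtain i j where x: "x = (i, j)" "(i, j) \<in> pairs n" by (cases x) auto
    show "(case x of (i, j) \<Rightarrow> \<Prod>t<2 * m. astar n m k j - astar n m k i - of_int (int t - int m + 1))
        = (case x of (i, j) \<Rightarrow> fact ((j - i + 1) * m) / fact ((j - i - 1) * m))"
      unfolding x(1) prod.case by (rule Q_astar_pair[OF n m k x(2)])
  qed
  then show ?thesis by (simp only: mev_FF G_astar[OF n m k])
qed

lemma T_eval:
  "(\<Prod>(i, j)\<in>pairs n. fact ((j - i + 1) * m) / fact ((j - i - 1) * m))
     = (\<Prod>j<n. fact ((j + 1) * m)) * (\<Prod>j<n. fact (j * m)) / (fact m ^ n :: real)"
proof -
  let ?g = "\<lambda>d. fact (d * m) :: real"
  have "(\<Prod>(i, j)\<in>pairs n. fact ((j - i + 1) * m) / fact ((j - i - 1) * m))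
      = (\<Prod>j<n. ?g (j + 1) * ?g j / (?g 1 * ?g 0))"
    by (rule telescope_pairs[where g="\<lambda>d. fact (d * m)"]) simp
  also have "\<dots> = (\<Prod>j<n. ?g (j + 1) * ?g j) / (\<Prod>j<n. ?g 1 * ?g 0)"
    by (rule prod_dividef)
  also have "\<dots> = (\<Prod>j<n. fact ((j + 1) * m)) * (\<Prod>j<n. fact (j * m)) / fact m ^ n"
    by (simp add: prod.distrib)
  finally show ?thesis .
qed

lemma D_eval:
  "(\<Prod>i\<in>{1..n}. phi (Bset (k - 1)) (astar n m k i))
     = (-1) ^ (m * (n choose 2)) * (\<Prod>r<n. fact (k - 1 - r * m)) * (\<Prod>r<n. fact (r * m))"
proof -
  have "(\<Prod>i\<in>{1..n}. phi (Bset (k - 1)) (astar n m k i))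
      = (\<Prod>i\<in>{1..n}. (-1) ^ ((i - 1) * m) * fact (k - 1 - (i - 1) * m) * fact ((i - 1) * m))"
    by (rule prod.cong[OF refl]) (rule phi_astar[OF n m k])
  also have "\<dots> = (\<Prod>r<n. (-1) ^ (r * m) * fact (k - 1 - r * m) * fact (r * m))"
    by (rule prod.reindex_bij_witness[where i=Suc and j="\<lambda>i. i - 1"]) auto
  also have "\<dots> = (\<Prod>r<n. (-1::real) ^ (r * m)) * (\<Prod>r<n. fact (k - 1 - r * m)) * (\<Prod>r<n. fact (r * m))"
    by (simp add: prod.distrib)
  also have "(\<Prod>r<n. (-1::real) ^ (r * m)) = (-1) ^ (m * (n choose 2))"
  proof -
    have "(\<Prod>r<n. (-1::real) ^ (r * m)) = (-1) ^ (\<Sum>r<n. r * m)" by (simp add: power_sum)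
    also have "(\<Sum>r<n. r * m) = m * (n choose 2)"
      by (simp add: sum_distrib_right[symmetric] sum_lessThan_choose2 mult.commute)
    finally show ?thesis .
  qed
  finally show ?thesis .
qed

lemma sign_cancel: "(-1::real) ^ ((m - 1) * c) * ((-1) ^ (m * c) * (-1) ^ c) = 1"
proof -
  have "(m - 1) * c + (m * c + c) = 2 * (m * c)" using m by (cases m) (auto simp: algebra_simps)
  then have "(-1::real) ^ ((m - 1) * c) * ((-1) ^ (m * c) * (-1) ^ c) = (-1) ^ (2 * (m * c))"
    by (simp only: power_add[symmetric])
  also have "\<dots> = 1" by (simp add: power_mult)
  finally show ?thesis .
qed

lemma NN_alt: "NN n m k = (k - 1 - m * (n - 1)) * n"
  unfolding NN_def diff_mult_distrib by (simp add: ac_simps)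

lemma main_C:
  "real_of_int (Poly_Mapping.lookup (fodd n m k) (monomial_exps n (dd n k)))
   = (-1) ^ ((m - 1) * (n choose 2))
     * ((\<Prod>j\<in>{1..n}. fact (j * m)) / (fact m ^ n * fact n))
     * (fact ((k - 1 - m * (n - 1)) * n) / (\<Prod>r\<in>{0..n-1}. fact (k - 1 - r * m)))"
proof -
  let ?C = "real_of_int (Poly_Mapping.lookup (fodd n m k) (monomial_exps n (dd n k)))"
  let ?E = "real_of_int (Poly_Mapping.lookup (feven n m k) (monomial_exps n (\<lambda>_. k - 1)))"
  let ?c = "n choose 2"
  define P1 where "P1 = (\<Prod>j<n. fact ((j + 1) * m) :: real)"
  define P0 where "P0 = (\<Prod>j<n. fact (j * m) :: real)"
  define F where "F = (\<Prod>r<n. fact (k - 1 - r * m) :: real)"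
  define fN where "fN = (fact (NN n m k) :: real)"
  define S where "S = ((-1::real) ^ (m * ?c))"
  define s where "s = ((-1::real) ^ ?c)"
  define \<sigma> where "\<sigma> = ((-1::real) ^ ((m - 1) * ?c))"
  have nz: "P0 \<noteq> 0" "F \<noteq> 0" "S \<noteq> 0" "s \<noteq> 0" "fact m ^ n \<noteq> (0::real)" "fact n \<noteq> (0::real)"
    by (auto simp: P0_def F_def S_def s_def)
  have A: "?E = fact n * s * ?C"
    using coeff_feven_sym[OF n m k] unfolding card_pairs s_def .
  have B: "?E = fN * (P1 * P0 / fact m ^ n) / (S * F * P0)"
    using coeffE_FF[OF n m k] unfolding mev_astar_FF T_eval D_eval fN_def P1_def P0_def F_def S_def .
  have sc: "\<sigma> * (S * s) = 1" unfolding \<sigma>_def S_def s_def by (rule sign_cancel)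
  have C: "?C = \<sigma> * (P1 / (fact m ^ n * fact n)) * (fN / F)"
  proof -
    have "fact n * s * ?C = fN * (P1 * P0 / fact m ^ n) / (S * F * P0)" using A B by simp
    then have "?C = fN * P1 / (fact m ^ n * S * F * fact n * s)"
      using nz by (simp add: field_simps)
    also have "\<dots> = (\<sigma> * (S * s)) * (fN * P1 / (fact m ^ n * S * F * fact n * s))" using sc by simp
    also have "\<dots> = \<sigma> * (P1 / (fact m ^ n * fact n)) * (fN / F)"
      using nz by (simp add: field_simps)
    finally show ?thesis .
  qed
  have P1': "(\<Prod>j\<in>{1..n}. fact (j * m)) = P1"
    unfolding P1_def by (rule prod.reindex_bij_witness[where i="\<lambda>j. j + 1" and j="\<lambda>i. i - 1"]) auto
  have F': "(\<Prod>r\<in>{0..n-1}. fact (k - 1 - r * m)) = F"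
  proof -
    have "{0..n-1} = {..<n}" using n by auto
    then show ?thesis by (simp add: F_def)
  qed
  show ?thesis using C unfolding P1' F' NN_alt[symmetric] \<sigma>_def fN_def .
qed

end


lemma first_part:
  fixes k m n :: nat
  assumes "k > 0" "m > 0" "n > 0" "k > m * (n - 1)"
  shows "real_of_int (coeff_of
            ((\<Sum>i\<in>{1..n}. var i) ^ ((k - 1) * n - m * n * (n - 1)) *
             (\<Prod>(i, j)\<in>{(i, j). 1 \<le> i \<and> i < j \<and> j \<le> n}. (var j - var i) ^ (2 * m - 1)))
            (monomial_exps n (\<lambda>i. k - n + i - 1)))
         = (-1) ^ ((m - 1) * (n choose 2))
           * ((\<Prod>j\<in>{1..n}. fact (j * m)) / (fact m ^ n * fact n))
           * (fact ((k - 1 - m * (n - 1)) * n) / (\<Prod>r\<in>{0..n-1}. fact (k - 1 - r * m)))"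
proof -
  have f: "(\<Sum>i\<in>{1..n}. var i) ^ ((k - 1) * n - m * n * (n - 1)) *
             (\<Prod>(i, j)\<in>{(i, j). 1 \<le> i \<and> i < j \<and> j \<le> n}. (var j - var i) ^ (2 * m - 1)) = fodd n m k"
    by (simp only: fodd_def Ssum_def NN_def pairs_def)
  have d: "(\<lambda>i. k - n + i - 1) = dd n k" by (rule ext) (simp only: dd_def)
  show ?thesis unfolding f d coeff_of_def by (rule main_C) (use assms in auto)
qed

theorem corollary2p2:
  fixes k m n :: nat
  assumes "k > 0" "m > 0" "n > 0" "k > m * (n - 1)"
  shows "real_of_int (coeff_of
            ((\<Sum>i\<in>{1..n}. var i) ^ ((k - 1) * n - m * n * (n - 1)) *
             (\<Prod>(i, j)\<in>{(i, j). 1 \<le> i \<and> i < j \<and> j \<le> n}. (var j - var i) ^ (2 * m - 1)))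
            (monomial_exps n (\<lambda>i. k - n + i - 1)))
         = (-1) ^ ((m - 1) * (n choose 2))
           * ((\<Prod>j\<in>{1..n}. fact (j * m)) / (fact m ^ n * fact n))
           * (fact ((k - 1 - m * (n - 1)) * n) / (\<Prod>r\<in>{0..n-1}. fact (k - 1 - r * m)))
       \<and> real_of_int (coeff_of
            (\<Prod>(i, j)\<in>{(i, j). 1 \<le> i \<and> i < j \<and> j \<le> n}. (var j - var i) ^ (2 * m - 1))
            (monomial_exps n (\<lambda>i. (m - 1) * (n - 1) + i - 1)))
         = (-1) ^ ((m - 1) * (n choose 2)) * (fact (m * n) / (fact m ^ n * fact n))"
proof
  show "real_of_int (coeff_of
            ((\<Sum>i\<in>{1..n}. var i) ^ ((k - 1) * n - m * n * (n - 1)) *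
             (\<Prod>(i, j)\<in>{(i, j). 1 \<le> i \<and> i < j \<and> j \<le> n}. (var j - var i) ^ (2 * m - 1)))
            (monomial_exps n (\<lambda>i. k - n + i - 1)))
         = (-1) ^ ((m - 1) * (n choose 2))
           * ((\<Prod>j\<in>{1..n}. fact (j * m)) / (fact m ^ n * fact n))
           * (fact ((k - 1 - m * (n - 1)) * n) / (\<Prod>r\<in>{0..n-1}. fact (k - 1 - r * m)))"
    by (rule first_part[OF assms])
next
  let ?k = "m * (n - 1) + 1"
  let ?V = "\<Prod>(i, j)\<in>{(i, j). 1 \<le> i \<and> i < j \<and> j \<le> n}. (var j - var i) ^ (2 * m - 1)"
  have m0: "m > 0" and n0: "n > 0" using assms by auto
  have fp: "real_of_int (coeff_of
            ((\<Sum>i\<in>{1..n}. var i) ^ ((?k - 1) * n - m * n * (n - 1)) * ?V)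
            (monomial_exps n (\<lambda>i. ?k - n + i - 1)))
         = (-1) ^ ((m - 1) * (n choose 2))
           * ((\<Prod>j\<in>{1..n}. fact (j * m)) / (fact m ^ n * fact n))
           * (fact ((?k - 1 - m * (n - 1)) * n) / (\<Prod>r\<in>{0..n-1}. fact (?k - 1 - r * m)))"
    by (rule first_part) (use m0 n0 in auto)
  have e0: "(?k - 1) * n - m * n * (n - 1) = 0" by (simp add: ac_simps)
  have e1: "(\<lambda>i. ?k - n + i - 1) = (\<lambda>i. (m - 1) * (n - 1) + i - 1)"
  proof -
    have "n - 1 \<le> m * (n - 1)" using m0 by simp
    then have "?k - n = (m - 1) * (n - 1)" using n0 by (simp add: diff_mult_distrib)
    then show ?thesis by simp
  qed
  have e2: "(?k - 1 - m * (n - 1)) * n = 0" by simp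
  have e3: "(\<Prod>r\<in>{0..n-1}. fact (?k - 1 - r * m)) = (\<Prod>j\<in>{0..n-1}. fact (j * m) :: real)"
  proof (rule prod.reindex_bij_witness[where i="\<lambda>j. n - 1 - j" and j="\<lambda>r. n - 1 - r"])
    fix r assume "r \<in> {0..n-1}"
    have a: "?k - 1 = m * (n - 1)" by simp
    have b: "(n - 1 - r) * m = (n - 1) * m - r * m" by (rule diff_mult_distrib)
    have "?k - 1 - r * m = (n - 1 - r) * m" unfolding a b by (simp add: mult.commute)
    then show "fact ((n - 1 - r) * m) = (fact (?k - 1 - r * m) :: real)" by simp
  qed auto
  have R: "(\<Prod>j\<in>{1..n}. fact (j * m) :: real) = fact (n * m) * (\<Prod>j\<in>{1..n-1}. fact (j * m))"
  proof -
    have "{1..n} = insert n {1..n-1}" using n0 by auto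
    moreover have "n \<notin> {1..n-1}" using n0 by auto
    ultimately show ?thesis by simp
  qed
  have R0: "(\<Prod>j\<in>{0..n-1}. fact (j * m) :: real) = (\<Prod>j\<in>{1..n-1}. fact (j * m))"
  proof -
    have "{0..n-1} = insert 0 {1..n-1}" by auto
    then show ?thesis by simp
  qed
  have nzR: "(\<Prod>j\<in>{1..n-1}. fact (j * m) :: real) \<noteq> 0" by simp
  have "real_of_int (coeff_of ?V (monomial_exps n (\<lambda>i. (m - 1) * (n - 1) + i - 1)))
      = (-1) ^ ((m - 1) * (n choose 2))
           * ((\<Prod>j\<in>{1..n}. fact (j * m)) / (fact m ^ n * fact n))
           * (fact 0 / (\<Prod>j\<in>{0..n-1}. fact (j * m)))"
    using fp unfolding e0 e1 e2 e3 power_0 mult_1 .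
  also have "\<dots> = (-1) ^ ((m - 1) * (n choose 2)) * (fact (m * n) / (fact m ^ n * fact n))"
    unfolding R R0 using nzR by (simp add: field_simps mult.commute)
  finally show "real_of_int (coeff_of ?V (monomial_exps n (\<lambda>i. (m - 1) * (n - 1) + i - 1)))
         = (-1) ^ ((m - 1) * (n choose 2)) * (fact (m * n) / (fact m ^ n * fact n))" .
qed

end
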